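(* Let $X$ be a compact smooth $n$-dimensional manifold and $P$ an $h$-differential operator on $X$ of the form $\sum_{|\alpha|\le m}a_\alpha(x;h)(hD_x)^\alpha$ in local coordinates, with coefficients uniformly bounded in $C^\infty$, $a_\alpha=a_\alpha^0+\mathcal{O}(h)$ in $C^\infty$, $a_\alpha$ independent of $h$ for $|\alpha|=m$, and classically elliptic: $|\sum_{|\alpha|=m}a_\alpha(x)\xi^\alpha|\ge\frac1C|\xi|^m$. Let $p(x,\xi)=\sum_{|\alpha|\le m}a^0_\alpha(x)\xi^\alpha$, fix $z\in\mathbb{C}$, let $s=|p-z|^2$, and for $0<\alpha\ll1$ let $\Lambda=\left(\frac{\alpha+s}{1+s}\right)^{1/2}$. Let $w\in\mathbb{C}$ with $|w|\le C_0$ and $\Im w\neq0$. Then for all $\ell\in\mathbb{R}$ and $\widetilde\alpha,\beta\in\mathbb{N}^n$ there exists $J\in\mathbb{N}$ such that, in canonical coordinates $(x,\xi)$ associated with any local coordinates, $$\partial_x^{\widetilde\alpha}\partial_\xi^\beta\Big(w-\frac s\alpha\Big)^\ell=\mathcal{O}(1)\Big(1+\frac s\alpha\Big)^\ell\Lambda^{-|\widetilde\alpha|-|\beta|}\langle\xi\rangle^{-|\beta|}|\Im w|^{-J},$$ uniformly in $\xi$, $\alpha$, $w$ and locally uniformly in $x$.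
   Context: $\langle\xi\rangle=(1+|\xi|^2)^{1/2}$. For non-integer $\ell$, the power is taken with a branch of the logarithm defined on the half-plane containing $w-s/\alpha$ (which has the same nonzero imaginary part as $w$). *)

theory Defs
  imports "HOL-Analysis.Analysis"
begin

definition dirderiv :: "('a::real_normed_vector \<Rightarrow> 'b::real_normed_vector) \<Rightarrow> 'a \<Rightarrow> 'a \<Rightarrow> 'b" where
  "dirderiv f v x = vector_derivative (\<lambda>t::real. f (x + t *\<^sub>R v)) (at 0)"

fun iter_dirderiv :: "('a::real_normed_vector \<Rightarrow> 'b::real_normed_vector) \<Rightarrow> 'a list \<Rightarrow> 'a \<Rightarrow> 'b" where
  "iter_dirderiv f [] = f"
| "iter_dirderiv f (v # vs) = dirderiv (iter_dirderiv f vs) v"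

definition smooth_on :: "'a::real_normed_vector set \<Rightarrow> ('a \<Rightarrow> 'b::real_normed_vector) \<Rightarrow> bool" where
  "smooth_on U f \<longleftrightarrow> (\<forall>vs. iter_dirderiv f vs differentiable_on U)"

definition mono :: "real^'n \<Rightarrow> ('n::finite \<Rightarrow> nat) \<Rightarrow> complex" where
  "mono \<xi> \<beta> = (\<Prod>i\<in>UNIV. (complex_of_real (\<xi> $ i)) ^ (\<beta> i))"

definition symb :: "(('n::finite \<Rightarrow> nat) \<Rightarrow> real^'n \<Rightarrow> complex) \<Rightarrow> nat \<Rightarrow> real^'n \<Rightarrow> real^'n \<Rightarrow> complex" where
  "symb a m x \<xi> = (\<Sum>\<beta>\<in>{\<beta>. sum \<beta> UNIV \<le> m}. a \<beta> x * mono \<xi> \<beta>)"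

definition princ :: "(('n::finite \<Rightarrow> nat) \<Rightarrow> real^'n \<Rightarrow> complex) \<Rightarrow> nat \<Rightarrow> real^'n \<Rightarrow> real^'n \<Rightarrow> complex" where
  "princ a m x \<xi> = (\<Sum>\<beta>\<in>{\<beta>. sum \<beta> UNIV = m}. a \<beta> x * mono \<xi> \<beta>)"

definition sfun :: "(('n::finite \<Rightarrow> nat) \<Rightarrow> real^'n \<Rightarrow> complex) \<Rightarrow> nat \<Rightarrow> complex \<Rightarrow> real^'n \<Rightarrow> real^'n \<Rightarrow> real" where
  "sfun a m z x \<xi> = (cmod (symb a m x \<xi> - z))\<^sup>2"

definition Lam :: "real \<Rightarrow> real \<Rightarrow> real" where
  "Lam \<alpha> s = sqrt ((\<alpha> + s) / (1 + s))"

definition jbr :: "real^'n \<Rightarrow> real" where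
  "jbr \<xi> = sqrt (1 + (norm \<xi>)\<^sup>2)"

definition dx :: "'n::finite \<Rightarrow> (real^'n) \<times> (real^'n)" where
  "dx i = (axis i 1, 0)"
definition dxi :: "'n::finite \<Rightarrow> (real^'n) \<times> (real^'n)" where
  "dxi i = (0, axis i 1)"

end

theory Submission
  imports Defs
begin

lemma iter_append: "iter_dirderiv f (vs @ ws) = iter_dirderiv (iter_dirderiv f ws) vs"
  by (induction vs) auto

lemma dirderiv_has:
  assumes "(f has_derivative f') (at x)"
  shows "dirderiv f v x = f' v"
proof -
  have l: "bounded_linear f'" using assms has_derivative_bounded_linear by blast
  have "((\<lambda>t::real. x + t *\<^sub>R v) has_derivative (\<lambda>t. t *\<^sub>R v)) (at 0)"
    by (auto intro!: derivative_eq_intros)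
  then have "((\<lambda>t::real. f (x + t *\<^sub>R v)) has_derivative (\<lambda>t. f' (t *\<^sub>R v))) (at 0)"
    using has_derivative_compose[of "\<lambda>t::real. x + t *\<^sub>R v" "\<lambda>t. t *\<^sub>R v" 0 UNIV f f'] assms
    by (simp add: o_def)
  then have "((\<lambda>t::real. f (x + t *\<^sub>R v)) has_vector_derivative f' v) (at 0)"
    unfolding has_vector_derivative_def using linear_scale[OF bounded_linear.linear[OF l]]
    by simp
  then show ?thesis unfolding dirderiv_def by (rule vector_derivative_at)
qed

lemma dirderiv_local:
  assumes "open S" "x \<in> S" "\<And>y. y \<in> S \<Longrightarrow> f y = g y"
  shows "dirderiv f v x = dirderiv g v x"
proof -
  let ?S1 = "{t::real. x + t *\<^sub>R v \<in> S}"
  have o: "open ?S1"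
  proof -
    have "continuous_on UNIV (\<lambda>t::real. x + t *\<^sub>R v)" by (intro continuous_intros)
    from open_vimage[OF assms(1) this] show ?thesis by (simp add: vimage_def)
  qed
  have z: "0 \<in> ?S1" using assms by simp
  have "\<And>D. ((\<lambda>t. f (x + t *\<^sub>R v)) has_vector_derivative D) (at 0) \<longleftrightarrow>
             ((\<lambda>t. g (x + t *\<^sub>R v)) has_vector_derivative D) (at 0)"
    using has_vector_derivative_transform_within_open[OF _ o z] assms(3) by (metis (no_types, lifting) mem_Collect_eq)
  then show ?thesis unfolding dirderiv_def vector_derivative_def by simp
qed

lemma iter_local:
  assumes "open S" "x \<in> S" "\<And>y. y \<in> S \<Longrightarrow> f y = g y"
  shows "iter_dirderiv f vs x = iter_dirderiv g vs x"
  using assms(2)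
proof (induction vs arbitrary: x)
  case Nil then show ?case using assms by simp
next
  case (Cons v vs)
  have "dirderiv (iter_dirderiv f vs) v x = dirderiv (iter_dirderiv g vs) v x"
    by (rule dirderiv_local[OF assms(1) Cons.prems]) (use Cons.IH in blast)
  then show ?case by simp
qed

lemma dirderiv_const[simp]: "dirderiv (\<lambda>_. c) v x = 0"
  unfolding dirderiv_def by (simp add: vector_derivative_at)

lemma dirderiv_zero_dir[simp]: "dirderiv f 0 x = 0"
  unfolding dirderiv_def by (simp add: vector_derivative_at)

lemma iter_const_zero[simp]: "iter_dirderiv (\<lambda>_. 0) vs = (\<lambda>_. 0)"
proof (induction vs)
  case (Cons v vs) show ?case by (simp only: iter_dirderiv.simps Cons.IH) (simp add: fun_eq_iff)
qed simp

lemma dirderiv_diff_at: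
  assumes "f differentiable (at x)"
  shows "dirderiv f v x = frechet_derivative f (at x) v"
  using dirderiv_has assms frechet_derivative_works by blast

lemma dirderiv_mult:
  fixes f g :: "'a::real_normed_vector \<Rightarrow> 'b::real_normed_algebra"
  assumes "f differentiable (at x)" "g differentiable (at x)"
  shows "dirderiv (\<lambda>y. f y * g y) v x = dirderiv f v x * g x + f x * dirderiv g v x"
proof -
  obtain f' g' where f: "(f has_derivative f') (at x)" and g: "(g has_derivative g') (at x)"
    using assms unfolding differentiable_def by blast
  have "((\<lambda>y. f y * g y) has_derivative (\<lambda>h. f x * g' h + f' h * g x)) (at x)"
    using has_derivative_mult[OF f g] by simp
  from dirderiv_has[OF this] dirderiv_has[OF f] dirderiv_has[OF g] show ?thesis by (simp add: add.commute)
qed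

lemma dirderiv_add:
  assumes "f differentiable (at x)" "g differentiable (at x)"
  shows "dirderiv (\<lambda>y. f y + g y) v x = dirderiv f v x + dirderiv g v x"
proof -
  obtain f' g' where f: "(f has_derivative f') (at x)" and g: "(g has_derivative g') (at x)"
    using assms unfolding differentiable_def by blast
  from dirderiv_has[OF has_derivative_add[OF f g]] dirderiv_has[OF f] dirderiv_has[OF g] show ?thesis by simp
qed

lemma dirderiv_cnj:
  assumes "f differentiable (at x)"
  shows "dirderiv (\<lambda>y. cnj (f y)) v x = cnj (dirderiv f v x)"
proof -
  obtain f' where f: "(f has_derivative f') (at x)"
    using assms unfolding differentiable_def by blast
  have "((\<lambda>y. cnj (f y)) has_derivative (\<lambda>h. cnj (f' h))) (at x)"
    using bounded_linear.has_derivative[OF bounded_linear_cnj f] .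
  from dirderiv_has[OF this] dirderiv_has[OF f] show ?thesis by simp
qed

lemma dirderiv_chain:
  fixes f :: "'a::real_normed_vector \<Rightarrow> complex"
  assumes "f differentiable (at x)" "(h has_field_derivative h') (at (f x))"
  shows "dirderiv (\<lambda>y. h (f y)) v x = h' * dirderiv f v x"
proof -
  obtain f' where f: "(f has_derivative f') (at x)"
    using assms unfolding differentiable_def by blast
  have "((\<lambda>y. h (f y)) has_derivative (\<lambda>k. h' * f' k)) (at x)"
    using has_derivative_compose[OF f assms(2)[unfolded has_field_derivative_def]] by (simp add: o_def mult.commute)
  from dirderiv_has[OF this] dirderiv_has[OF f] show ?thesis by simp
qed



lemma diffon_cong:
  assumes "\<And>x. x \<in> S \<Longrightarrow> f x = g x" "g differentiable_on S"
  shows "f differentiable_on S"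
  unfolding differentiable_on_def differentiable_def
proof
  fix x assume x: "x \<in> S"
  then obtain D where "(g has_derivative D) (at x within S)" using assms(2) unfolding differentiable_on_def differentiable_def by blast
  then have "(f has_derivative D) (at x within S)" using has_derivative_transform[of x S f g D] x assms(1) by blast
  then show "\<exists>D. (f has_derivative D) (at x within S)" by blast
qed

lemma diffon_at: "open S \<Longrightarrow> f differentiable_on S \<Longrightarrow> x \<in> S \<Longrightarrow> f differentiable (at x)"
  using differentiable_on_eq_differentiable_at by blast

fun splits :: "'a list \<Rightarrow> ('a list \<times> 'a list) list" where
  "splits [] = [([],[])]"
| "splits (v#vs) = concat (map (\<lambda>(A,B). [(v#A,B),(A,v#B)]) (splits vs))"

lemma splits_mset: "(A,B) \<in> set (splits vs) \<Longrightarrow> mset A + mset B = mset vs"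
  by (induction vs arbitrary: A B) auto

lemma splits_len: "(A,B) \<in> set (splits vs) \<Longrightarrow> length A + length B = length vs"
  by (metis size_mset size_union splits_mset)

lemma sum_list_splits_cons:
  "(\<Sum>e\<leftarrow>concat (map (\<lambda>(A,B). [(v#A,B),(A,v#B)]) L). h e) = (\<Sum>e\<leftarrow>L. h (v#fst e,snd e) + h (fst e,v#snd e))"
  by (induction L) auto

lemma dirderiv_sum_list:
  fixes F :: "'c \<Rightarrow> 'a::real_normed_vector \<Rightarrow> complex"
  assumes "\<forall>e\<in>set L. F e differentiable (at x)"
  shows "dirderiv (\<lambda>y. \<Sum>e\<leftarrow>L. F e y) v x = (\<Sum>e\<leftarrow>L. dirderiv (F e) v x) \<and> (\<lambda>y. \<Sum>e\<leftarrow>L. F e y) differentiable (at x)"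
  using assms
proof (induction L)
  case Nil then show ?case by simp
next
  case (Cons e L)
  then have d: "F e differentiable (at x)" "(\<lambda>y. \<Sum>e\<leftarrow>L. F e y) differentiable (at x)" by auto
  show ?case using dirderiv_add[OF d, of v] Cons differentiable_add[OF d] by simp
qed

lemma leibniz:
  fixes f g :: "'a::real_normed_vector \<Rightarrow> complex"
  assumes "open S" "\<forall>ws. length ws < length vs \<longrightarrow> iter_dirderiv f ws differentiable_on S \<and> iter_dirderiv g ws differentiable_on S"
  shows "\<forall>x\<in>S. iter_dirderiv (\<lambda>y. f y * g y) vs x = (\<Sum>e\<leftarrow>splits vs. iter_dirderiv f (fst e) x * iter_dirderiv g (snd e) x)"
  using assms(2)
proof (induction vs)
  case Nil then show ?case by simp
next
  case (Cons v vs)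
  have IH: "\<forall>x\<in>S. iter_dirderiv (\<lambda>y. f y * g y) vs x = (\<Sum>e\<leftarrow>splits vs. iter_dirderiv f (fst e) x * iter_dirderiv g (snd e) x)"
    using Cons by auto
  show ?case
  proof
    fix x assume x: "x \<in> S"
    have dA: "\<And>A B. (A,B) \<in> set (splits vs) \<Longrightarrow> iter_dirderiv f A differentiable (at x) \<and> iter_dirderiv g B differentiable (at x)"
    proof -
      fix A B assume "(A,B) \<in> set (splits vs)"
      then have "length A < length (v#vs)" "length B < length (v#vs)" using splits_len by fastforce+
      then show "iter_dirderiv f A differentiable (at x) \<and> iter_dirderiv g B differentiable (at x)"
        using Cons.prems diffon_at[OF assms(1) _ x] by meson
    qed
    have "iter_dirderiv (\<lambda>y. f y * g y) (v#vs) x = dirderiv (\<lambda>y. \<Sum>e\<leftarrow>splits vs. iter_dirderiv f (fst e) y * iter_dirderiv g (snd e) y) v x"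
      using dirderiv_local[OF assms(1) x, of "iter_dirderiv (\<lambda>y. f y * g y) vs"] IH by simp
    also have "\<dots> = (\<Sum>e\<leftarrow>splits vs. dirderiv ((\<lambda>e y. iter_dirderiv f (fst e) y * iter_dirderiv g (snd e) y) e) v x)"
    proof -
      have "\<forall>e\<in>set (splits vs). (\<lambda>y. iter_dirderiv f (fst e) y * iter_dirderiv g (snd e) y) differentiable (at x)"
      proof
        fix e assume "e \<in> set (splits vs)"
        then have "(fst e, snd e) \<in> set (splits vs)" by simp
        from dA[OF this] show "(\<lambda>y. iter_dirderiv f (fst e) y * iter_dirderiv g (snd e) y) differentiable (at x)"
          by (intro differentiable_mult) auto
      qed
      from conjunct1[OF dirderiv_sum_list[OF this]] show ?thesis .
    qed
    also have "\<dots> = (\<Sum>e\<leftarrow>splits vs. iter_dirderiv f (v#fst e) x * iter_dirderiv g (snd e) x + iter_dirderiv f (fst e) x * iter_dirderiv g (v#snd e) x)"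
    proof (rule arg_cong[where f=sum_list], rule map_cong, simp)
      fix e assume "e \<in> set (splits vs)"
      then have "(fst e, snd e) \<in> set (splits vs)" by simp
      from dA[OF this] show "dirderiv (\<lambda>y. iter_dirderiv f (fst e) y * iter_dirderiv g (snd e) y) v x =
         iter_dirderiv f (v # fst e) x * iter_dirderiv g (snd e) x + iter_dirderiv f (fst e) x * iter_dirderiv g (v # snd e) x"
        by (simp add: dirderiv_mult)
    qed
    also have "\<dots> = (\<Sum>e\<leftarrow>splits (v#vs). iter_dirderiv f (fst e) x * iter_dirderiv g (snd e) x)"
      by (simp only: splits.simps sum_list_splits_cons) simp
    finally show "iter_dirderiv (\<lambda>y. f y * g y) (v#vs) x = (\<Sum>e\<leftarrow>splits (v#vs). iter_dirderiv f (fst e) x * iter_dirderiv g (snd e) x)" .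
  qed
qed

lemma smooth_iter: "smooth_on S f \<Longrightarrow> smooth_on S (iter_dirderiv f ws)"
  unfolding smooth_on_def
proof
  fix vs assume "\<forall>vs. iter_dirderiv f vs differentiable_on S"
  then have "iter_dirderiv f (vs @ ws) differentiable_on S" by blast
  then show "iter_dirderiv (iter_dirderiv f ws) vs differentiable_on S" by (simp only: iter_append)
qed

lemma smooth_diffon: "smooth_on S f \<Longrightarrow> iter_dirderiv f ws differentiable_on S"
  unfolding smooth_on_def by (erule allE)

lemma smooth_mult:
  fixes f g :: "'a::real_normed_vector \<Rightarrow> complex"
  assumes "open S" "smooth_on S f" "smooth_on S g"
  shows "smooth_on S (\<lambda>y. f y * g y)"
  unfolding smooth_on_def
proof
  fix vs
  have L: "\<forall>x\<in>S. iter_dirderiv (\<lambda>y. f y * g y) vs x = (\<Sum>e\<leftarrow>splits vs. iter_dirderiv f (fst e) x * iter_dirderiv g (snd e) x)"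
    by (rule leibniz[OF assms(1)]) (simp add: smooth_diffon[OF assms(2)] smooth_diffon[OF assms(3)])
  have "(\<lambda>x. \<Sum>e\<leftarrow>splits vs. iter_dirderiv f (fst e) x * iter_dirderiv g (snd e) x) differentiable_on S"
    unfolding differentiable_on_eq_differentiable_at[OF assms(1)]
  proof
    fix x assume x: "x \<in> S"
    show "(\<lambda>x. \<Sum>e\<leftarrow>splits vs. iter_dirderiv f (fst e) x * iter_dirderiv g (snd e) x) differentiable (at x)"
    proof -
      have "\<forall>e\<in>set (splits vs). (\<lambda>y. iter_dirderiv f (fst e) y * iter_dirderiv g (snd e) y) differentiable (at x)"
        using diffon_at[OF assms(1) smooth_diffon[OF assms(2)] x] diffon_at[OF assms(1) smooth_diffon[OF assms(3)] x]
        by (intro ballI differentiable_mult) auto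
      from conjunct2[OF dirderiv_sum_list[OF this]] show ?thesis .
    qed
  qed
  then show "iter_dirderiv (\<lambda>y. f y * g y) vs differentiable_on S"
    by (rule diffon_cong[rotated]) (use L in blast)
qed

lemma iter_add:
  fixes f g :: "'a::real_normed_vector \<Rightarrow> complex"
  assumes "open S" "smooth_on S f" "smooth_on S g" "x \<in> S"
  shows "iter_dirderiv (\<lambda>y. f y + g y) vs x = iter_dirderiv f vs x + iter_dirderiv g vs x"
  using assms(4)
proof (induction vs arbitrary: x)
  case (Cons v vs)
  have "iter_dirderiv (\<lambda>y. f y + g y) (v#vs) x = dirderiv (\<lambda>y. iter_dirderiv f vs y + iter_dirderiv g vs y) v x"
    using dirderiv_local[OF assms(1) Cons.prems, of "iter_dirderiv (\<lambda>y. f y + g y) vs"] Cons.IH by simp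
  also have "\<dots> = iter_dirderiv f (v#vs) x + iter_dirderiv g (v#vs) x"
    using dirderiv_add[OF diffon_at[OF assms(1) smooth_diffon[OF assms(2), of vs] Cons.prems]
      diffon_at[OF assms(1) smooth_diffon[OF assms(3), of vs] Cons.prems]] by simp
  finally show ?case .
qed simp

lemma smooth_add:
  fixes f g :: "'a::real_normed_vector \<Rightarrow> complex"
  assumes "open S" "smooth_on S f" "smooth_on S g"
  shows "smooth_on S (\<lambda>y. f y + g y)"
  unfolding smooth_on_def
proof
  fix vs
  have "(\<lambda>x. iter_dirderiv f vs x + iter_dirderiv g vs x) differentiable_on S"
    using smooth_diffon[OF assms(2)] smooth_diffon[OF assms(3)] by (intro differentiable_on_add)
  then show "iter_dirderiv (\<lambda>y. f y + g y) vs differentiable_on S"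
    by (rule diffon_cong[rotated]) (rule iter_add[OF assms])
qed

lemma iter_const_cons: "iter_dirderiv (\<lambda>_. c) (v#vs) = (\<lambda>_. 0)"
proof (induction vs arbitrary: v)
  case Nil then show ?case by (simp add: fun_eq_iff)
next
  case (Cons w vs) then show ?case by (simp only: iter_dirderiv.simps(2)[of _ v] Cons.IH) (simp add: fun_eq_iff)
qed

lemma smooth_const: "smooth_on S (\<lambda>_. c)"
  unfolding smooth_on_def
proof
  fix vs show "iter_dirderiv (\<lambda>_. c) vs differentiable_on S"
    by (cases vs) (auto simp: differentiable_on_def iter_const_cons simp del: iter_dirderiv.simps(2))
qed

lemma iter_cmult:
  fixes f :: "'a::real_normed_vector \<Rightarrow> complex"
  assumes "open S" "smooth_on S f" "x \<in> S"
  shows "iter_dirderiv (\<lambda>y. c * f y) vs x = c * iter_dirderiv f vs x"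
  using assms(3)
proof (induction vs arbitrary: x)
  case (Cons v vs)
  have "iter_dirderiv (\<lambda>y. c * f y) (v#vs) x = dirderiv (\<lambda>y. c * iter_dirderiv f vs y) v x"
    using dirderiv_local[OF assms(1) Cons.prems, of "iter_dirderiv (\<lambda>y. c * f y) vs"] Cons.IH by simp
  also have "\<dots> = c * iter_dirderiv f (v#vs) x"
    using dirderiv_mult[OF differentiable_const[of c] diffon_at[OF assms(1) smooth_diffon[OF assms(2), of vs] Cons.prems]] by simp
  finally show ?case .
qed simp

lemma smooth_cmult:
  fixes f :: "'a::real_normed_vector \<Rightarrow> complex"
  assumes "open S" "smooth_on S f"
  shows "smooth_on S (\<lambda>y. c * f y)"
  using smooth_mult[OF assms(1) smooth_const assms(2)] .

lemma iter_cnj: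
  fixes f :: "'a::real_normed_vector \<Rightarrow> complex"
  assumes "open S" "smooth_on S f" "x \<in> S"
  shows "iter_dirderiv (\<lambda>y. cnj (f y)) vs x = cnj (iter_dirderiv f vs x)"
  using assms(3)
proof (induction vs arbitrary: x)
  case (Cons v vs)
  have "iter_dirderiv (\<lambda>y. cnj (f y)) (v#vs) x = dirderiv (\<lambda>y. cnj (iter_dirderiv f vs y)) v x"
    using dirderiv_local[OF assms(1) Cons.prems, of "iter_dirderiv (\<lambda>y. cnj (f y)) vs"] Cons.IH by simp
  also have "\<dots> = cnj (iter_dirderiv f (v#vs) x)"
    using dirderiv_cnj[OF diffon_at[OF assms(1) smooth_diffon[OF assms(2), of vs] Cons.prems]] by simp
  finally show ?case .
qed simp

lemma smooth_cnj:
  fixes f :: "'a::real_normed_vector \<Rightarrow> complex"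
  assumes "open S" "smooth_on S f"
  shows "smooth_on S (\<lambda>y. cnj (f y))"
  unfolding smooth_on_def
proof
  fix vs
  have "(\<lambda>x. cnj (iter_dirderiv f vs x)) differentiable_on S"
    using smooth_diffon[OF assms(2)] unfolding differentiable_on_def by (simp add: differentiable_cnj_iff)
  then show "iter_dirderiv (\<lambda>y. cnj (f y)) vs differentiable_on S"
    by (rule diffon_cong[rotated]) (rule iter_cnj[OF assms])
qed



lemma sum_list_bound:
  fixes F :: "'e \<Rightarrow> 'x \<Rightarrow> complex"
  assumes "\<forall>e\<in>set L. \<exists>c J. \<forall>x\<in>X. cmod (F e x) \<le> c * G x * Y x ^ J"
    and G: "\<forall>x\<in>X. G x \<ge> 0" and Y: "\<forall>x\<in>X. Y x \<ge> 1"
  shows "\<exists>c J. \<forall>x\<in>X. cmod (\<Sum>e\<leftarrow>L. F e x) \<le> c * G x * Y x ^ J"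
  using assms(1)
proof (induction L)
  case Nil then show ?case by (auto intro: exI[of _ 0])
next
  case (Cons e L)
  obtain c1 J1 where 1: "\<forall>x\<in>X. cmod (F e x) \<le> c1 * G x * Y x ^ J1" using Cons.prems by auto
  obtain c2 J2 where 2: "\<forall>x\<in>X. cmod (\<Sum>e\<leftarrow>L. F e x) \<le> c2 * G x * Y x ^ J2" using Cons by auto
  show ?case
  proof (intro exI ballI)
    fix x assume x: "x \<in> X"
    have y1: "Y x ^ J1 \<le> Y x ^ (J1+J2)" "Y x ^ J2 \<le> Y x ^ (J1+J2)"
      using Y x by (auto intro!: power_increasing)
    have g: "G x * Y x ^ J1 \<le> G x * Y x ^ (J1+J2)" "G x * Y x ^ J2 \<le> G x * Y x ^ (J1+J2)"
      using y1 G x by (auto intro: mult_left_mono)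
    have p: "0 \<le> G x * Y x ^ (J1+J2)" using G Y x by auto
    have "cmod (\<Sum>e\<leftarrow>e#L. F e x) \<le> cmod (F e x) + cmod (\<Sum>e\<leftarrow>L. F e x)" by (simp add: norm_triangle_ineq)
    also have "\<dots> \<le> c1 * (G x * Y x ^ J1) + c2 * (G x * Y x ^ J2)" using 1 2 x by (intro add_mono) (auto simp: mult.assoc)
    also have "\<dots> \<le> max c1 0 * (G x * Y x ^ (J1+J2)) + max c2 0 * (G x * Y x ^ (J1+J2))"
      using g p G Y x
      by (intro add_mono; smt (verit, best) mult_left_mono mult_nonneg_nonneg zero_le_power mult_right_mono)
    finally show "cmod (\<Sum>e\<leftarrow>e#L. F e x) \<le> (max c1 0 + max c2 0) * G x * Y x ^ (J1+J2)"
      by (simp add: algebra_simps)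
  qed
qed

definition Dirs :: "((real^'n::finite) \<times> (real^'n)) set" where
  "Dirs = range dx \<union> range dxi"

definition cnt :: "((real^'n::finite) \<times> (real^'n)) list \<Rightarrow> nat" where
  "cnt vs = length (filter (\<lambda>v. fst v = 0) vs)"

lemma cnt_mset: "mset A + mset B = mset vs \<Longrightarrow> cnt A + cnt B = cnt vs"
proof -
  assume h: "mset A + mset B = mset vs"
  have "\<And>xs. cnt xs = size (filter_mset (\<lambda>v. fst v = 0) (mset xs))"
    unfolding cnt_def by (metis mset_filter size_mset)
  then show ?thesis using h by (metis filter_union_mset size_union)
qed

lemma cnt_append: "cnt (A @ B) = cnt A + cnt B"
  unfolding cnt_def by simp

lemma cnt_dx_dxi: "cnt (map dx ds @ map dxi es) = length es"
  unfolding cnt_def dx_def dxi_def by (simp add: filter_map o_def)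

lemma dirs_in: "set (map dx ds @ map dxi es) \<subseteq> Dirs"
  unfolding Dirs_def by auto

lemma jbr_ge1: "jbr \<xi> \<ge> 1"
  unfolding jbr_def by simp

lemma jbr_pos[simp]: "jbr \<xi> > 0"
  using jbr_ge1[of \<xi>] by linarith

lemma jbr_nonneg[simp]: "jbr \<xi> \<ge> 0"
  using jbr_ge1[of \<xi>] by linarith

lemma jbr_ne0[simp]: "jbr \<xi> \<noteq> 0"
  using jbr_ge1[of \<xi>] by linarith

lemma norm_le_jbr: "norm \<xi> \<le> jbr \<xi>"
  unfolding jbr_def by (simp add: real_le_rsqrt)



locale ctx =
  fixes U :: "(real^'n::finite) set" and K :: "(real^'n) set"
  assumes openU: "open U" and KU: "K \<subseteq> U" and compK: "compact K"
begin

abbreviation "OS \<equiv> U \<times> (UNIV :: (real^'n) set)"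

lemma openOS: "open OS" using openU by (simp add: open_Times)

lemma KOS: "x \<in> K \<Longrightarrow> (x, \<xi>) \<in> OS" using KU by auto

definition PB :: "((real^'n) \<times> (real^'n) \<Rightarrow> complex) \<Rightarrow> nat \<Rightarrow> bool" where
  "PB f d \<longleftrightarrow> smooth_on OS f \<and> (\<forall>ws. set ws \<subseteq> Dirs \<longrightarrow>
     (\<exists>C. \<forall>x\<in>K. \<forall>\<xi>::real^'n. cmod (iter_dirderiv f ws (x,\<xi>)) \<le> C * jbr \<xi> ^ d * (1 / jbr \<xi>) ^ cnt ws))"

lemma PB_mono:
  assumes "PB f d" "d \<le> d'"
  shows "PB f d'"
  unfolding PB_def
proof (intro conjI allI impI)
  show "smooth_on OS f" using assms PB_def by blast
  fix ws :: "((real^'n) \<times> (real^'n)) list" assume ws: "set ws \<subseteq> Dirs"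
  obtain C where C: "\<forall>x\<in>K. \<forall>\<xi>::real^'n. cmod (iter_dirderiv f ws (x,\<xi>)) \<le> C * jbr \<xi> ^ d * (1 / jbr \<xi>) ^ cnt ws"
    using assms ws PB_def by blast
  show "\<exists>C. \<forall>x\<in>K. \<forall>\<xi>::real^'n. cmod (iter_dirderiv f ws (x,\<xi>)) \<le> C * jbr \<xi> ^ d' * (1 / jbr \<xi>) ^ cnt ws"
  proof (intro exI[of _ "max C 0"] ballI allI)
    fix x and \<xi> :: "real^'n" assume x: "x \<in> K"
    have j: "jbr \<xi> ^ d \<le> jbr \<xi> ^ d'" using jbr_ge1 assms(2) by (intro power_increasing) auto
    have h: "0 \<le> (1 / jbr \<xi>) ^ cnt ws" "0 \<le> jbr \<xi> ^ d" using jbr_ge1[of \<xi>] by auto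
    have "cmod (iter_dirderiv f ws (x,\<xi>)) \<le> C * jbr \<xi> ^ d * (1 / jbr \<xi>) ^ cnt ws" using C x by blast
    also have "\<dots> \<le> max C 0 * jbr \<xi> ^ d * (1 / jbr \<xi>) ^ cnt ws"
      using h by (intro mult_right_mono) (auto intro: mult_right_mono)
    also have "\<dots> \<le> max C 0 * jbr \<xi> ^ d' * (1 / jbr \<xi>) ^ cnt ws"
      using h j by (intro mult_right_mono mult_left_mono) auto
    finally show "cmod (iter_dirderiv f ws (x,\<xi>)) \<le> max C 0 * jbr \<xi> ^ d' * (1 / jbr \<xi>) ^ cnt ws" .
  qed
qed

lemma PB_add:
  assumes "PB f d" "PB g d"
  shows "PB (\<lambda>p. f p + g p) d"
  unfolding PB_def
proof (intro conjI allI impI)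
  have sf: "smooth_on OS f" and sg: "smooth_on OS g" using assms PB_def by auto
  show "smooth_on OS (\<lambda>p. f p + g p)" by (rule smooth_add[OF openOS sf sg])
  fix ws :: "((real^'n) \<times> (real^'n)) list" assume ws: "set ws \<subseteq> Dirs"
  obtain C1 where C1: "\<forall>x\<in>K. \<forall>\<xi>::real^'n. cmod (iter_dirderiv f ws (x,\<xi>)) \<le> C1 * jbr \<xi> ^ d * (1 / jbr \<xi>) ^ cnt ws"
    using assms ws PB_def by blast
  obtain C2 where C2: "\<forall>x\<in>K. \<forall>\<xi>::real^'n. cmod (iter_dirderiv g ws (x,\<xi>)) \<le> C2 * jbr \<xi> ^ d * (1 / jbr \<xi>) ^ cnt ws"
    using assms ws PB_def by blast
  show "\<exists>C. \<forall>x\<in>K. \<forall>\<xi>::real^'n. cmod (iter_dirderiv (\<lambda>p. f p + g p) ws (x,\<xi>)) \<le> C * jbr \<xi> ^ d * (1 / jbr \<xi>) ^ cnt ws"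
  proof (intro exI[of _ "C1 + C2"] ballI allI)
    fix x and \<xi> :: "real^'n" assume x: "x \<in> K"
    have "iter_dirderiv (\<lambda>p. f p + g p) ws (x,\<xi>) = iter_dirderiv f ws (x,\<xi>) + iter_dirderiv g ws (x,\<xi>)"
      by (rule iter_add[OF openOS sf sg KOS[OF x]])
    then have "cmod (iter_dirderiv (\<lambda>p. f p + g p) ws (x,\<xi>)) \<le> cmod (iter_dirderiv f ws (x,\<xi>)) + cmod (iter_dirderiv g ws (x,\<xi>))"
      by (simp add: norm_triangle_ineq)
    also have "\<dots> \<le> C1 * jbr \<xi> ^ d * (1 / jbr \<xi>) ^ cnt ws + C2 * jbr \<xi> ^ d * (1 / jbr \<xi>) ^ cnt ws"
      using C1 C2 x by (intro add_mono) auto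
    finally show "cmod (iter_dirderiv (\<lambda>p. f p + g p) ws (x,\<xi>)) \<le> (C1 + C2) * jbr \<xi> ^ d * (1 / jbr \<xi>) ^ cnt ws"
      by (simp add: algebra_simps)
  qed
qed

lemma PB_mult:
  assumes "PB f d1" "PB g d2"
  shows "PB (\<lambda>p. f p * g p) (d1 + d2)"
  unfolding PB_def
proof (intro conjI allI impI)
  have sf: "smooth_on OS f" and sg: "smooth_on OS g" using assms PB_def by auto
  show "smooth_on OS (\<lambda>p. f p * g p)" by (rule smooth_mult[OF openOS sf sg])
  fix ws :: "((real^'n) \<times> (real^'n)) list" assume ws: "set ws \<subseteq> Dirs"
  have L: "\<forall>p\<in>OS. iter_dirderiv (\<lambda>y. f y * g y) ws p = (\<Sum>e\<leftarrow>splits ws. iter_dirderiv f (fst e) p * iter_dirderiv g (snd e) p)"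
    by (rule leibniz[OF openOS]) (simp add: smooth_diffon[OF sf] smooth_diffon[OF sg])
  let ?G = "\<lambda>p::(real^'n) \<times> (real^'n). jbr (snd p) ^ (d1 + d2) * (1 / jbr (snd p)) ^ cnt ws"
  have "\<exists>c J. \<forall>p\<in>K \<times> UNIV. cmod (\<Sum>e\<leftarrow>splits ws. iter_dirderiv f (fst e) p * iter_dirderiv g (snd e) p) \<le> c * ?G p * 1 ^ J"
  proof (rule sum_list_bound)
    show "\<forall>p\<in>K \<times> UNIV. 0 \<le> ?G p" by (auto intro!: mult_nonneg_nonneg)
    show "\<forall>p\<in>K \<times> UNIV. (1::real) \<le> 1" by simp
    show "\<forall>e\<in>set (splits ws). \<exists>c J. \<forall>p\<in>K \<times> UNIV. cmod (iter_dirderiv f (fst e) p * iter_dirderiv g (snd e) p) \<le> c * ?G p * 1 ^ J"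
    proof
      fix e assume e: "e \<in> set (splits ws)"
      then have ms: "mset (fst e) + mset (snd e) = mset ws" using splits_mset[of "fst e" "snd e"] by simp
      then have sub: "set (fst e) \<subseteq> Dirs" "set (snd e) \<subseteq> Dirs" using ws
        by (metis Un_subset_iff set_mset_mset set_mset_union)+
      obtain C1 where C1: "\<forall>x\<in>K. \<forall>\<xi>::real^'n. cmod (iter_dirderiv f (fst e) (x,\<xi>)) \<le> C1 * jbr \<xi> ^ d1 * (1 / jbr \<xi>) ^ cnt (fst e)"
        using assms sub PB_def by blast
      obtain C2 where C2: "\<forall>x\<in>K. \<forall>\<xi>::real^'n. cmod (iter_dirderiv g (snd e) (x,\<xi>)) \<le> C2 * jbr \<xi> ^ d2 * (1 / jbr \<xi>) ^ cnt (snd e)"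
        using assms sub PB_def by blast
      have cn: "cnt (fst e) + cnt (snd e) = cnt ws" using cnt_mset[OF ms] .
      show "\<exists>c J. \<forall>p\<in>K \<times> UNIV. cmod (iter_dirderiv f (fst e) p * iter_dirderiv g (snd e) p) \<le> c * ?G p * 1 ^ J"
      proof (intro exI[of _ "C1 * C2"] exI[of _ 0] ballI)
        fix p assume p: "p \<in> K \<times> (UNIV :: (real^'n) set)"
        obtain x \<xi> where px: "p = (x, \<xi>)" "x \<in> K" using p by auto
        have a1: "cmod (iter_dirderiv f (fst e) p) \<le> C1 * jbr \<xi> ^ d1 * (1 / jbr \<xi>) ^ cnt (fst e)" using C1 px by auto
        have a2: "cmod (iter_dirderiv g (snd e) p) \<le> C2 * jbr \<xi> ^ d2 * (1 / jbr \<xi>) ^ cnt (snd e)" using C2 px by auto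
        have "cmod (iter_dirderiv f (fst e) p * iter_dirderiv g (snd e) p) \<le>
              (C1 * jbr \<xi> ^ d1 * (1 / jbr \<xi>) ^ cnt (fst e)) * (C2 * jbr \<xi> ^ d2 * (1 / jbr \<xi>) ^ cnt (snd e))"
          unfolding norm_mult by (rule mult_mono[OF a1 a2]) (use a1 in \<open>auto intro: order_trans[OF norm_ge_zero]\<close>)
        also have "\<dots> = C1 * C2 * (jbr \<xi> ^ (d1 + d2) * (1 / jbr \<xi>) ^ (cnt (fst e) + cnt (snd e)))"
          by (simp add: power_add algebra_simps)
        finally show "cmod (iter_dirderiv f (fst e) p * iter_dirderiv g (snd e) p) \<le> C1 * C2 * ?G p * 1 ^ 0"
          using cn px by simp
      qed
    qed
  qed
  then obtain c J where cJ: "\<forall>p\<in>K \<times> UNIV. cmod (\<Sum>e\<leftarrow>splits ws. iter_dirderiv f (fst e) p * iter_dirderiv g (snd e) p) \<le> c * ?G p * 1 ^ J"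
    by blast
  show "\<exists>C. \<forall>x\<in>K. \<forall>\<xi>::real^'n. cmod (iter_dirderiv (\<lambda>p. f p * g p) ws (x,\<xi>)) \<le> C * jbr \<xi> ^ (d1 + d2) * (1 / jbr \<xi>) ^ cnt ws"
  proof (intro exI[of _ c] ballI allI)
    fix x and \<xi> :: "real^'n" assume x: "x \<in> K"
    show "cmod (iter_dirderiv (\<lambda>p. f p * g p) ws (x,\<xi>)) \<le> c * jbr \<xi> ^ (d1 + d2) * (1 / jbr \<xi>) ^ cnt ws"
      using cJ L KOS[OF x, of \<xi>] x by (simp add: mult.assoc)
  qed
qed

end



lemma iter_fst:
  "iter_dirderiv (\<lambda>p. a (fst p)) ws p = iter_dirderiv a (map fst ws) (fst p)"
proof (induction ws arbitrary: p)
  case (Cons v ws)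
  have e: "iter_dirderiv (\<lambda>p. a (fst p)) ws = (\<lambda>p. iter_dirderiv a (map fst ws) (fst p))"
    using Cons.IH by (simp add: fun_eq_iff)
  show ?case by (simp add: e dirderiv_def)
qed simp

lemma iter_zero_dir:
  assumes "0 \<in> set vs"
  shows "iter_dirderiv f vs x = 0"
proof -
  obtain vs1 vs2 where "vs = vs1 @ 0 # vs2" using assms by (meson split_list)
  then have "iter_dirderiv f vs = iter_dirderiv (dirderiv (iter_dirderiv f vs2) 0) vs1"
    by (simp add: iter_append)
  also have "dirderiv (iter_dirderiv f vs2) 0 = (\<lambda>_. 0)" by (simp add: fun_eq_iff)
  finally show ?thesis by simp
qed

context ctx begin

lemma PB_const: "PB (\<lambda>_. c) 0"
  unfolding PB_def
proof (intro conjI allI impI)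
  show "smooth_on OS (\<lambda>_. c)" by (rule smooth_const)
  fix ws :: "((real^'n) \<times> (real^'n)) list" assume ws: "set ws \<subseteq> Dirs"
  show "\<exists>C. \<forall>x\<in>K. \<forall>\<xi>::real^'n. cmod (iter_dirderiv (\<lambda>_. c) ws (x,\<xi>)) \<le> C * jbr \<xi> ^ 0 * (1 / jbr \<xi>) ^ cnt ws"
  proof (cases ws)
    case Nil then show ?thesis by (auto simp: cnt_def intro: exI[of _ "cmod c"])
  next
    case (Cons v vs) then show ?thesis by (auto simp: iter_const_cons simp del: iter_dirderiv.simps intro: exI[of _ 0])
  qed
qed

lemma PB_zero: "PB (\<lambda>_. 0) d"
  using PB_mono[OF PB_const] by simp

lemma PB_cnj:
  assumes "PB f d"
  shows "PB (\<lambda>p. cnj (f p)) d"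
  unfolding PB_def
proof (intro conjI allI impI)
  have sf: "smooth_on OS f" using assms PB_def by auto
  show "smooth_on OS (\<lambda>p. cnj (f p))" by (rule smooth_cnj[OF openOS sf])
  fix ws :: "((real^'n) \<times> (real^'n)) list" assume ws: "set ws \<subseteq> Dirs"
  obtain C where C: "\<forall>x\<in>K. \<forall>\<xi>::real^'n. cmod (iter_dirderiv f ws (x,\<xi>)) \<le> C * jbr \<xi> ^ d * (1 / jbr \<xi>) ^ cnt ws"
    using assms ws PB_def by blast
  show "\<exists>C. \<forall>x\<in>K. \<forall>\<xi>::real^'n. cmod (iter_dirderiv (\<lambda>p. cnj (f p)) ws (x,\<xi>)) \<le> C * jbr \<xi> ^ d * (1 / jbr \<xi>) ^ cnt ws"
    using C iter_cnj[OF openOS sf KOS] by (intro exI[of _ C]) simp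
qed

lemma PB_coef:
  assumes "smooth_on U a"
  shows "PB (\<lambda>p. a (fst p)) 0"
  unfolding PB_def
proof (intro conjI allI impI)
  show "smooth_on OS (\<lambda>p. a (fst p))"
    unfolding smooth_on_def
  proof
    fix ws :: "((real^'n) \<times> (real^'n)) list"
    show "iter_dirderiv (\<lambda>p. a (fst p)) ws differentiable_on OS"
      unfolding iter_fst differentiable_on_eq_differentiable_at[OF openOS]
    proof
      fix p :: "(real^'n) \<times> (real^'n)" assume p: "p \<in> OS"
      have d: "iter_dirderiv a (map fst ws) differentiable (at (fst p))"
        using diffon_at[OF openU smooth_diffon[OF assms] ] p by auto
      have "fst differentiable (at p)" by (rule bounded_linear_imp_differentiable[OF bounded_linear_fst])
      from differentiable_chain_at[OF this d] show "(\<lambda>p. iter_dirderiv a (map fst ws) (fst p)) differentiable (at p)"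
        by (simp add: o_def)
    qed
  qed
  fix ws :: "((real^'n) \<times> (real^'n)) list" assume ws: "set ws \<subseteq> Dirs"
  show "\<exists>C. \<forall>x\<in>K. \<forall>\<xi>::real^'n. cmod (iter_dirderiv (\<lambda>p. a (fst p)) ws (x,\<xi>)) \<le> C * jbr \<xi> ^ 0 * (1 / jbr \<xi>) ^ cnt ws"
  proof (cases "cnt ws = 0")
    case False
    then have "0 \<in> set (map fst ws)" unfolding cnt_def by (auto simp: filter_empty_conv image_iff intro: bexI[where x="(0,_)"])
    then show ?thesis by (auto simp: iter_fst iter_zero_dir intro: exI[of _ 0])
  next
    case True
    have "continuous_on U (iter_dirderiv a (map fst ws))"
      by (rule differentiable_imp_continuous_on[OF smooth_diffon[OF assms]])
    then have "continuous_on K (iter_dirderiv a (map fst ws))" using KU continuous_on_subset by blast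
    then have "compact (iter_dirderiv a (map fst ws) ` K)" using compK compact_continuous_image by blast
    then obtain C where "\<forall>y\<in>iter_dirderiv a (map fst ws) ` K. norm y \<le> C"
      using compact_imp_bounded bounded_iff by metis
    then show ?thesis using True by (auto simp: iter_fst intro!: exI[of _ C])
  qed
qed

lemma PB_coord: "PB (\<lambda>p. complex_of_real (snd p $ i)) 1"
proof -
  let ?f = "\<lambda>p::(real^'n) \<times> (real^'n). complex_of_real (snd p $ i)"
  have bl: "bounded_linear ?f"
    using bounded_linear_compose[OF bounded_linear_of_real bounded_linear_compose[OF bounded_linear_vec_nth[of i] bounded_linear_snd]]
    by (simp add: o_def)
  have dd: "dirderiv ?f v = (\<lambda>_. ?f v)" for v
    using dirderiv_has[OF bounded_linear_imp_has_derivative[OF bl]] by (simp add: fun_eq_iff)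
  have it: "iter_dirderiv ?f ws = (if ws = [] then ?f else if length ws = 1 then (\<lambda>_. ?f (hd ws)) else (\<lambda>_. 0))" for ws
  proof (cases ws rule: rev_cases)
    case (snoc ws' v)
    then have "iter_dirderiv ?f ws = iter_dirderiv (\<lambda>_. ?f v) ws'" by (simp add: iter_append dd)
    then show ?thesis using snoc by (cases ws') (auto simp: iter_const_cons simp del: iter_dirderiv.simps(2))
  qed simp
  show ?thesis
    unfolding PB_def
  proof (intro conjI allI impI)
    show "smooth_on OS ?f"
      unfolding smooth_on_def it
      using bounded_linear_imp_differentiable[OF bl] by (auto simp: differentiable_on_def)
    fix ws :: "((real^'n) \<times> (real^'n)) list" assume ws: "set ws \<subseteq> Dirs"
    show "\<exists>C. \<forall>x\<in>K. \<forall>\<xi>::real^'n. cmod (iter_dirderiv ?f ws (x,\<xi>)) \<le> C * jbr \<xi> ^ 1 * (1 / jbr \<xi>) ^ cnt ws"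
    proof (intro exI[of _ 1] ballI allI)
      fix x and \<xi> :: "real^'n" assume x: "x \<in> K"
      show "cmod (iter_dirderiv ?f ws (x,\<xi>)) \<le> 1 * jbr \<xi> ^ 1 * (1 / jbr \<xi>) ^ cnt ws"
      proof (cases "ws = []")
        case True then show ?thesis using component_le_norm_cart[of \<xi> i] norm_le_jbr[of \<xi>] by (simp add: it cnt_def)
      next
        case ne: False
        show ?thesis
        proof (cases "length ws = 1")
          case True
          then obtain v where v: "ws = [v]" by (cases ws) auto
          then have "v \<in> Dirs" using ws by simp
          then consider j where "v = dx j" | j where "v = dxi j" unfolding Dirs_def by auto
          then show ?thesis
          proof cases
            case 1 then show ?thesis using v by (simp add: it dx_def)
          next
            case 2
            have "\<bar>axis j (1::real) $ i\<bar> \<le> 1" by (simp add: axis_def)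
            then show ?thesis using 2 v jbr_pos[of \<xi>] by (simp add: it dxi_def cnt_def)
          qed
        next
          case False then show ?thesis using ne by (simp add: it)
        qed
      qed
    qed
  qed
qed

lemma PB_sum:
  assumes "finite I" "\<forall>i\<in>I. PB (f i) d"
  shows "PB (\<lambda>p. \<Sum>i\<in>I. f i p) d"
  using assms
proof (induction I rule: finite_induct)
  case empty then show ?case using PB_zero by simp
next
  case (insert i I) then show ?case using PB_add[of "f i" d "\<lambda>p. \<Sum>i\<in>I. f i p"] by simp
qed

lemma PB_prod:
  assumes "finite I" "\<forall>i\<in>I. PB (f i) (d i)"
  shows "PB (\<lambda>p. \<Prod>i\<in>I. f i p) (\<Sum>i\<in>I. d i)"
  using assms
proof (induction I rule: finite_induct)
  case empty then show ?case using PB_const by simp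
next
  case (insert i I) then show ?case using PB_mult[of "f i" "d i" "\<lambda>p. \<Prod>i\<in>I. f i p"] by simp
qed

lemma PB_pow:
  assumes "PB f d"
  shows "PB (\<lambda>p. f p ^ k) (d * k)"
proof (induction k)
  case 0 then show ?case using PB_const by simp
next
  case (Suc k) then show ?case using PB_mult[OF assms Suc] by (simp add: algebra_simps)
qed

end

lemma finite_Bm: "finite {\<beta>::'n::finite \<Rightarrow> nat. sum \<beta> UNIV \<le> m}"
proof (rule finite_subset)
  show "{\<beta>::'n \<Rightarrow> nat. sum \<beta> UNIV \<le> m} \<subseteq> {f. \<forall>x. (x \<in> UNIV \<longrightarrow> f x \<in> {..m}) \<and> (x \<notin> UNIV \<longrightarrow> f x = 0)}"
  proof (intro subsetI CollectI allI conjI impI)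
    fix f :: "'n \<Rightarrow> nat" and x assume "f \<in> {\<beta>. sum \<beta> UNIV \<le> m}"
    then have "sum f UNIV \<le> m" by simp
    moreover have "f x \<le> sum f UNIV" by (rule member_le_sum) auto
    ultimately show "f x \<in> {..m}" by simp
  qed simp
  show "finite {f::'n \<Rightarrow> nat. \<forall>x. (x \<in> UNIV \<longrightarrow> f x \<in> {..m}) \<and> (x \<notin> UNIV \<longrightarrow> f x = 0)}"
    by (rule finite_set_of_finite_funs) auto
qed

context ctx begin

lemma PB_symb:
  assumes "\<forall>\<beta>. smooth_on U (a \<beta>)"
  shows "PB (\<lambda>p. symb a m (fst p) (snd p)) m"
  unfolding symb_def mono_def
proof (rule PB_sum[OF finite_Bm], rule ballI)
  fix \<beta> :: "'n \<Rightarrow> nat" assume b: "\<beta> \<in> {\<beta>. sum \<beta> UNIV \<le> m}"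
  have "PB (\<lambda>p. \<Prod>i\<in>UNIV. complex_of_real (snd p $ i) ^ \<beta> i) (\<Sum>i\<in>UNIV. 1 * \<beta> i)"
  proof (rule PB_prod)
    show "\<forall>i\<in>UNIV. PB (\<lambda>p. complex_of_real (snd p $ i) ^ \<beta> i) (1 * \<beta> i)"
      using PB_pow[OF PB_coord] by blast
  qed simp
  from PB_mult[OF PB_coef[OF assms[rule_format, of \<beta>]] this]
  show "PB (\<lambda>p. a \<beta> (fst p) * (\<Prod>i\<in>UNIV. complex_of_real (snd p $ i) ^ \<beta> i)) m"
    using b PB_mono by simp
qed

end



lemma mono_bound: "cmod (mono \<xi> \<beta>) \<le> norm \<xi> ^ sum \<beta> UNIV"
proof -
  have "cmod (mono \<xi> \<beta>) = (\<Prod>i\<in>UNIV. \<bar>\<xi> $ i\<bar> ^ \<beta> i)"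
    unfolding mono_def by (simp add: prod_norm[symmetric] norm_power)
  also have "\<dots> \<le> (\<Prod>i\<in>UNIV. norm \<xi> ^ \<beta> i)"
    by (rule prod_mono) (auto intro: power_mono component_le_norm_cart)
  also have "\<dots> = norm \<xi> ^ sum \<beta> UNIV" by (simp add: power_sum)
  finally show ?thesis .
qed

lemma jbr_pow: "jbr \<xi> ^ (2*m) = (1 + norm \<xi> ^ 2) ^ m"
  unfolding jbr_def by (simp add: power_mult)

locale ctx2 = ctx U K for U :: "(real^'n::finite) set" and K +
  fixes a :: "('n \<Rightarrow> nat) \<Rightarrow> real^'n \<Rightarrow> complex" and m :: nat and z :: complex
  assumes smooth_a: "\<forall>\<beta>. smooth_on U (a \<beta>)"
    and ellip: "\<exists>C>0. \<forall>x\<in>K. \<forall>\<xi>. cmod (princ a m x \<xi>) \<ge> norm \<xi> ^ m / C"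
begin

definition low :: "real^'n \<Rightarrow> real^'n \<Rightarrow> complex" where
  "low x \<xi> = (\<Sum>\<beta>\<in>{\<beta>. sum \<beta> UNIV < m}. a \<beta> x * mono \<xi> \<beta>)"

lemma symb_split: "symb a m x \<xi> = princ a m x \<xi> + low x \<xi>"
proof -
  have e: "{\<beta>::'n\<Rightarrow>nat. sum \<beta> UNIV \<le> m} = {\<beta>. sum \<beta> UNIV = m} \<union> {\<beta>. sum \<beta> UNIV < m}" by auto
  have f1: "finite {\<beta>::'n\<Rightarrow>nat. sum \<beta> UNIV = m}" by (rule finite_subset[OF _ finite_Bm[of m]]) auto
  have f2: "finite {\<beta>::'n\<Rightarrow>nat. sum \<beta> UNIV < m}" by (rule finite_subset[OF _ finite_Bm[of m]]) auto
  show ?thesis unfolding symb_def princ_def low_def e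
    by (rule sum.union_disjoint[OF f1 f2]) auto
qed

lemma low_bound: "\<exists>A\<ge>0. \<forall>x\<in>K. \<forall>\<xi>. cmod (low x \<xi>) \<le> A * (1 + norm \<xi>) ^ (m - 1)"
proof -
  let ?B = "{\<beta>::'n\<Rightarrow>nat. sum \<beta> UNIV < m}"
  have fB: "finite ?B" by (rule finite_subset[OF _ finite_Bm[of m]]) auto
  have "continuous_on K (\<lambda>x. \<Sum>\<beta>\<in>?B. cmod (a \<beta> x))"
  proof (intro continuous_intros)
    fix \<beta> show "continuous_on K (a \<beta>)"
      using differentiable_imp_continuous_on[OF smooth_diffon[OF smooth_a[rule_format, of \<beta>], of "[]"]] KU
        continuous_on_subset by auto
  qed
  then have "compact ((\<lambda>x. \<Sum>\<beta>\<in>?B. cmod (a \<beta> x)) ` K)" using compK compact_continuous_image by blast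
  then obtain A where A: "\<forall>y\<in>(\<lambda>x. \<Sum>\<beta>\<in>?B. cmod (a \<beta> x)) ` K. norm y \<le> A"
    using compact_imp_bounded bounded_iff by metis
  show ?thesis
  proof (intro exI[of _ "max A 0"] conjI ballI allI)
    fix x \<xi> assume x: "x \<in> K"
    have "cmod (low x \<xi>) \<le> (\<Sum>\<beta>\<in>?B. cmod (a \<beta> x) * cmod (mono \<xi> \<beta>))"
      unfolding low_def by (rule order_trans[OF norm_sum]) (simp add: norm_mult)
    also have "\<dots> \<le> (\<Sum>\<beta>\<in>?B. cmod (a \<beta> x) * (1 + norm \<xi>) ^ (m - 1))"
    proof (rule sum_mono, rule mult_left_mono)
      fix \<beta> assume b: "\<beta> \<in> ?B"
      have "cmod (mono \<xi> \<beta>) \<le> norm \<xi> ^ sum \<beta> UNIV" by (rule mono_bound)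
      also have "\<dots> \<le> (1 + norm \<xi>) ^ sum \<beta> UNIV" by (rule power_mono) auto
      also have "\<dots> \<le> (1 + norm \<xi>) ^ (m - 1)" using b by (intro power_increasing) auto
      finally show "cmod (mono \<xi> \<beta>) \<le> (1 + norm \<xi>) ^ (m - 1)" .
    qed simp
    also have "\<dots> = (\<Sum>\<beta>\<in>?B. cmod (a \<beta> x)) * (1 + norm \<xi>) ^ (m - 1)" by (simp add: sum_distrib_right)
    also have "\<dots> \<le> max A 0 * (1 + norm \<xi>) ^ (m - 1)"
    proof (rule mult_right_mono)
      have "norm (\<Sum>\<beta>\<in>?B. cmod (a \<beta> x)) \<le> A" using A x by blast
      then show "(\<Sum>\<beta>\<in>?B. cmod (a \<beta> x)) \<le> max A 0" by simp
    qed simp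
    finally show "cmod (low x \<xi>) \<le> max A 0 * (1 + norm \<xi>) ^ (m - 1)" .
  qed simp
qed

lemma ellip_bound: "\<exists>E>0. \<forall>x\<in>K. \<forall>\<xi>. jbr \<xi> ^ (2*m) \<le> E * (1 + sfun a m z x \<xi>)"
proof (cases "m = 0")
  case True
  then show ?thesis by (auto simp: sfun_def intro!: exI[of _ 1])
next
  case m: False
  obtain C where C: "C > 0" "\<forall>x\<in>K. \<forall>\<xi>. cmod (princ a m x \<xi>) \<ge> norm \<xi> ^ m / C" using ellip by blast
  obtain A where A: "A \<ge> 0" "\<forall>x\<in>K. \<forall>\<xi>. cmod (low x \<xi>) \<le> A * (1 + norm \<xi>) ^ (m - 1)" using low_bound by blast
  define R where "R = max 1 (max (4*C*A*2^(m-1)) (4*C*cmod z))"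
  define E where "E = 2^m * 4 * C^2 + (1 + R^2)^m"
  show ?thesis
  proof (intro exI[of _ E] conjI ballI allI)
    have "(0::real) < 1 + R^2" by (simp add: add_pos_nonneg)
    then show "E > 0" unfolding E_def using C by (intro add_pos_pos) simp_all
    fix x \<xi> assume x: "x \<in> K"
    let ?r = "norm \<xi>" and ?s = "sfun a m z x \<xi>"
    have s0: "?s \<ge> 0" unfolding sfun_def by simp
    show "jbr \<xi> ^ (2*m) \<le> E * (1 + ?s)"
    proof (cases "?r \<ge> R")
      case False
      have "jbr \<xi> ^ (2*m) = (1 + ?r^2)^m" by (rule jbr_pow)
      also have "\<dots> \<le> (1 + R^2)^m" using False by (intro power_mono) (auto intro!: power_mono)
      also have "\<dots> \<le> E * 1" unfolding E_def by simp
      also have "\<dots> \<le> E * (1 + ?s)" using s0 \<open>E > 0\<close> by (intro mult_left_mono) auto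
      finally show ?thesis .
    next
      case True
      have r1: "?r \<ge> 1" using True R_def by linarith
      have rA: "?r \<ge> 4*C*A*2^(m-1)" and rz: "?r \<ge> 4*C*cmod z" using True R_def by linarith+
      have p1: "(1 + ?r)^(m-1) \<le> 2^(m-1) * ?r^(m-1)"
      proof -
        have "(1 + ?r)^(m-1) \<le> (2 * ?r)^(m-1)" using r1 by (intro power_mono) auto
        then show ?thesis by (simp add: power_mult_distrib)
      qed
      have rm: "?r^m = ?r * ?r^(m-1)" using m by (cases m) auto
      have "A * (1 + ?r)^(m-1) \<le> A * 2^(m-1) * ?r^(m-1)" using p1 A(1) by (simp add: mult.assoc mult_left_mono)
      also have "\<dots> \<le> ?r / (4*C) * ?r^(m-1)"
      proof (rule mult_right_mono)
        show "A * 2^(m-1) \<le> ?r / (4*C)" using rA C(1) by (simp add: field_simps)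
      qed simp
      finally have lowb: "A * (1 + ?r)^(m-1) \<le> ?r^m / (4*C)" using rm by simp
      have "?r \<le> ?r^m" using r1 m power_increasing[of 1 m ?r] by simp
      then have zb: "cmod z \<le> ?r^m / (4*C)" using rz C(1) by (simp add: field_simps)
      have "cmod (symb a m x \<xi> - z) \<ge> cmod (princ a m x \<xi>) - cmod (low x \<xi>) - cmod z"
      proof -
        let ?A = "princ a m x \<xi> + low x \<xi> - z"
        have e: "?A - low x \<xi> + z = princ a m x \<xi>" by simp
        have 1: "cmod (?A - low x \<xi> + z) \<le> cmod (?A - low x \<xi>) + cmod z" by (rule norm_triangle_ineq)
        have 2: "cmod (?A - low x \<xi>) \<le> cmod ?A + cmod (low x \<xi>)" by (rule norm_triangle_ineq4)
        have 3: "cmod (princ a m x \<xi>) \<le> cmod (?A - low x \<xi>) + cmod z" using 1 by (simp only: e)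
        show ?thesis unfolding symb_split using 2 3 by linarith
      qed
      moreover have "cmod (princ a m x \<xi>) \<ge> ?r^m / C" using C x by blast
      moreover have "cmod (low x \<xi>) \<le> ?r^m / (4*C)" using A(2) x lowb by (meson order_trans)
      moreover have "?r^m / (4*C) = (?r^m / C) / 4" "?r^m / (2*C) = (?r^m/C)/2" by simp_all
      ultimately have pz: "cmod (symb a m x \<xi> - z) \<ge> ?r^m / (2*C)" using zb by linarith
      have q0: "0 \<le> ?r^m / (2*C)" using C(1) by simp
      have "(?r^m / (2*C))^2 \<le> ?s" unfolding sfun_def using pz q0 by (intro power_mono) auto
      then have sb: "?r^(2*m) \<le> 4 * C^2 * ?s" using C(1) by (simp add: field_simps power_mult_distrib power_mult power2_eq_square)
      have "jbr \<xi> ^ (2*m) = (1 + ?r^2)^m" by (rule jbr_pow)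
      also have "\<dots> \<le> (2 * ?r^2)^m" using r1 mult_mono[of 1 ?r 1 ?r] by (intro power_mono) (auto simp: power2_eq_square)
      also have "\<dots> = 2^m * ?r^(2*m)" by (simp add: power_mult_distrib power_mult)
      also have "\<dots> \<le> 2^m * (4 * C^2 * ?s)" using sb by simp
      also have "\<dots> \<le> E * (1 + ?s)"
      proof -
        have y: "0 \<le> (1+R^2)^m * (1 + ?s)" using s0 by (simp add: add_nonneg_nonneg)
        have x: "0 \<le> (2::real)^m*4*C^2" by simp
        have "E * (1 + ?s) = 2^m*4*C^2 + (2^m*4*C^2)*?s + (1+R^2)^m * (1 + ?s)" unfolding E_def by (simp add: algebra_simps)
        moreover have "(2::real)^m * (4 * C^2 * ?s) = (2^m*4*C^2)*?s" by simp
        ultimately show ?thesis using x y by linarith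
      qed
      finally show ?thesis .
    qed
  qed
qed

end



lemma leibniz_diff:
  fixes f g :: "'a::real_normed_vector \<Rightarrow> complex"
  assumes "open S" "\<forall>ws. length ws \<le> n \<longrightarrow> iter_dirderiv f ws differentiable_on S \<and> iter_dirderiv g ws differentiable_on S"
    and "length vs \<le> n"
  shows "iter_dirderiv (\<lambda>y. f y * g y) vs differentiable_on S"
proof -
  have L: "\<forall>x\<in>S. iter_dirderiv (\<lambda>y. f y * g y) vs x = (\<Sum>e\<leftarrow>splits vs. iter_dirderiv f (fst e) x * iter_dirderiv g (snd e) x)"
    by (rule leibniz[OF assms(1)]) (use assms(2,3) in auto)
  have "(\<lambda>x. \<Sum>e\<leftarrow>splits vs. iter_dirderiv f (fst e) x * iter_dirderiv g (snd e) x) differentiable_on S"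
    unfolding differentiable_on_eq_differentiable_at[OF assms(1)]
  proof
    fix x assume x: "x \<in> S"
    have "\<forall>e\<in>set (splits vs). (\<lambda>y. iter_dirderiv f (fst e) y * iter_dirderiv g (snd e) y) differentiable (at x)"
    proof
      fix e assume e: "e \<in> set (splits vs)"
      then have "length (fst e) \<le> n" "length (snd e) \<le> n" using splits_len[of "fst e" "snd e" vs] assms(3) by auto
      then show "(\<lambda>y. iter_dirderiv f (fst e) y * iter_dirderiv g (snd e) y) differentiable (at x)"
        using assms(2) diffon_at[OF assms(1) _ x] by (intro differentiable_mult) blast+
    qed
    from conjunct2[OF dirderiv_sum_list[OF this]]
    show "(\<lambda>x. \<Sum>e\<leftarrow>splits vs. iter_dirderiv f (fst e) x * iter_dirderiv g (snd e) x) differentiable (at x)" .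
  qed
  then show ?thesis by (rule diffon_cong[rotated]) (use L in blast)
qed

context ctx2 begin

definition Pz :: "(real^'n) \<times> (real^'n) \<Rightarrow> complex" where
  "Pz p = symb a m (fst p) (snd p) + (- z)"
definition Sf :: "(real^'n) \<times> (real^'n) \<Rightarrow> complex" where
  "Sf p = Pz p * cnj (Pz p)"
definition sv :: "(real^'n) \<times> (real^'n) \<Rightarrow> real" where
  "sv p = sfun a m z (fst p) (snd p)"

lemma sv_nonneg: "sv p \<ge> 0" unfolding sv_def sfun_def by simp

lemma Sf_real: "Sf p = complex_of_real (sv p)"
  unfolding Sf_def sv_def sfun_def Pz_def using complex_norm_square[of "symb a m (fst p) (snd p) + - z"] by simp

lemma Pz_norm: "cmod (Pz p) = sqrt (sv p)"
  unfolding sv_def sfun_def Pz_def by simp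

lemma PB_Pz: "PB Pz m"
proof -
  have "PB (\<lambda>p. symb a m (fst p) (snd p) + (- z)) m"
    by (rule PB_add[OF PB_symb[OF smooth_a] PB_mono[OF PB_const]]) simp
  then show ?thesis unfolding Pz_def[abs_def] .
qed

lemma PB_cPz: "PB (\<lambda>p. cnj (Pz p)) m" by (rule PB_cnj[OF PB_Pz])

lemma smooth_Pz: "smooth_on OS Pz" using PB_Pz PB_def by blast

lemma smooth_Sf: "smooth_on OS Sf"
  unfolding Sf_def[abs_def] by (rule smooth_mult[OF openOS smooth_Pz smooth_cnj[OF openOS smooth_Pz]])

lemma Sf_bound:
  assumes ne: "ws \<noteq> []" and ws: "set ws \<subseteq> Dirs"
  shows "\<exists>M. \<forall>x\<in>K. \<forall>\<xi>::real^'n. cmod (iter_dirderiv Sf ws (x,\<xi>)) \<le>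
     M * ((sqrt (sv (x,\<xi>)) * jbr \<xi> ^ m + (if 2 \<le> length ws then jbr \<xi> ^ (2*m) else 0)) * (1 / jbr \<xi>) ^ cnt ws)"
proof -
  let ?cP = "\<lambda>p. cnj (Pz p)"
  have L: "\<forall>p\<in>OS. iter_dirderiv Sf ws p = (\<Sum>e\<leftarrow>splits ws. iter_dirderiv Pz (fst e) p * iter_dirderiv ?cP (snd e) p)"
    unfolding Sf_def[abs_def]
    by (rule leibniz[OF openOS]) (simp add: smooth_diffon[OF smooth_Pz] smooth_diffon[OF smooth_cnj[OF openOS smooth_Pz]])
  let ?G = "\<lambda>p::(real^'n) \<times> (real^'n). (sqrt (sv p) * jbr (snd p) ^ m + (if 2 \<le> length ws then jbr (snd p) ^ (2*m) else 0)) * (1 / jbr (snd p)) ^ cnt ws"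
  have G0: "\<forall>p\<in>K \<times> UNIV. 0 \<le> ?G p" using sv_nonneg by (auto intro!: mult_nonneg_nonneg add_nonneg_nonneg)
  have "\<exists>c J. \<forall>p\<in>K \<times> UNIV. cmod (\<Sum>e\<leftarrow>splits ws. iter_dirderiv Pz (fst e) p * iter_dirderiv ?cP (snd e) p) \<le> c * ?G p * 1 ^ J"
  proof (rule sum_list_bound[OF _ G0])
    show "\<forall>p\<in>K \<times> UNIV. (1::real) \<le> 1" by simp
    show "\<forall>e\<in>set (splits ws). \<exists>c J. \<forall>p\<in>K \<times> UNIV. cmod (iter_dirderiv Pz (fst e) p * iter_dirderiv ?cP (snd e) p) \<le> c * ?G p * 1 ^ J"
    proof
      fix e assume e: "e \<in> set (splits ws)"
      then have ms: "mset (fst e) + mset (snd e) = mset ws" using splits_mset[of "fst e" "snd e"] by simp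
      then have sub: "set (fst e) \<subseteq> Dirs" "set (snd e) \<subseteq> Dirs" using ws
        by (metis Un_subset_iff set_mset_mset set_mset_union)+
      have ln: "length (fst e) + length (snd e) = length ws" using splits_len[of "fst e" "snd e"] e by simp
      have cn: "cnt (fst e) + cnt (snd e) = cnt ws" using cnt_mset[OF ms] .
      obtain C1 where C1: "\<forall>x\<in>K. \<forall>\<xi>::real^'n. cmod (iter_dirderiv Pz (fst e) (x,\<xi>)) \<le> C1 * jbr \<xi> ^ m * (1 / jbr \<xi>) ^ cnt (fst e)"
        using PB_Pz sub PB_def by blast
      obtain C2 where C2: "\<forall>x\<in>K. \<forall>\<xi>::real^'n. cmod (iter_dirderiv ?cP (snd e) (x,\<xi>)) \<le> C2 * jbr \<xi> ^ m * (1 / jbr \<xi>) ^ cnt (snd e)"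
        using PB_cPz sub PB_def by blast
      show "\<exists>c J. \<forall>p\<in>K \<times> UNIV. cmod (iter_dirderiv Pz (fst e) p * iter_dirderiv ?cP (snd e) p) \<le> c * ?G p * 1 ^ J"
      proof (intro exI[of _ "max C1 0 + max C2 0 + max C1 0 * max C2 0"] exI[of _ 0] ballI)
        fix p assume p: "p \<in> K \<times> (UNIV :: (real^'n) set)"
        obtain x \<xi> where px: "p = (x, \<xi>)" "x \<in> K" using p by auto
        let ?h = "(1 / jbr \<xi>) ^ cnt ws" and ?s = "sqrt (sv p)" and ?j = "jbr \<xi> ^ m"
        let ?c = "max C1 0 + max C2 0 + max C1 0 * max C2 0"
        have h0: "0 \<le> ?h" "0 \<le> ?s" "0 \<le> ?j" using sv_nonneg[of p] by simp_all
        have c0: "max C1 0 \<le> ?c" "max C2 0 \<le> ?c" "max C1 0 * max C2 0 \<le> ?c"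
          using mult_nonneg_nonneg[of "max C1 0" "max C2 0"] by (simp_all add: max_def)
        have Gp: "?G p = (?s * ?j + (if 2 \<le> length ws then ?j * ?j else 0)) * ?h"
          using px by (simp add: power_mult power2_eq_square mult_2 power_add)
        have b: "cmod (iter_dirderiv Pz (fst e) p * iter_dirderiv ?cP (snd e) p) \<le> ?c * ?G p"
        proof (cases "fst e = []")
          case True
          then have "cnt (snd e) = cnt ws" using cn by (simp add: cnt_def)
          then have a2: "cmod (iter_dirderiv ?cP (snd e) p) \<le> max C2 0 * ?j * ?h"
            using C2 px by (smt (verit, best) mult_right_mono h0 mult_nonneg_nonneg)
          have "cmod (iter_dirderiv Pz (fst e) p * iter_dirderiv ?cP (snd e) p) = ?s * cmod (iter_dirderiv ?cP (snd e) p)"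
            using True by (simp add: norm_mult Pz_norm)
          also have "\<dots> \<le> ?s * (max C2 0 * ?j * ?h)" using a2 h0 by (intro mult_left_mono) auto
          also have "\<dots> = max C2 0 * (?s * ?j * ?h)" by (simp add: algebra_simps)
          also have "\<dots> \<le> ?c * (?s * ?j * ?h)" using c0 h0 by (intro mult_right_mono) auto
          also have "\<dots> \<le> ?c * ?G p" unfolding Gp using h0 c0
            by (intro mult_left_mono) (auto simp: distrib_right intro!: mult_nonneg_nonneg)
          finally show ?thesis .
        next
          case F1: False
          show ?thesis
          proof (cases "snd e = []")
            case True
            then have "cnt (fst e) = cnt ws" using cn by (simp add: cnt_def)
            then have a1: "cmod (iter_dirderiv Pz (fst e) p) \<le> max C1 0 * ?j * ?h"
              using C1 px by (smt (verit, best) mult_right_mono h0 mult_nonneg_nonneg)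
            have "cmod (iter_dirderiv Pz (fst e) p * iter_dirderiv ?cP (snd e) p) = cmod (iter_dirderiv Pz (fst e) p) * ?s"
              using True by (simp add: norm_mult Pz_norm)
            also have "\<dots> \<le> (max C1 0 * ?j * ?h) * ?s" using a1 h0 by (intro mult_right_mono) auto
            also have "\<dots> = max C1 0 * (?s * ?j * ?h)" by (simp add: algebra_simps)
            also have "\<dots> \<le> ?c * (?s * ?j * ?h)" using c0 h0 by (intro mult_right_mono) auto
            also have "\<dots> \<le> ?c * ?G p" unfolding Gp using h0 c0
              by (intro mult_left_mono) (auto simp: distrib_right intro!: mult_nonneg_nonneg)
            finally show ?thesis .
          next
            case F2: False
            have l2: "2 \<le> length ws" using F1 F2 ln by (cases "fst e"; cases "snd e") auto
            have a1: "cmod (iter_dirderiv Pz (fst e) p) \<le> max C1 0 * ?j * (1 / jbr \<xi>) ^ cnt (fst e)"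
              using C1 px by (smt (verit, best) mult_right_mono zero_le_power mult_nonneg_nonneg jbr_nonneg divide_nonneg_nonneg zero_le_one)
            have a2: "cmod (iter_dirderiv ?cP (snd e) p) \<le> max C2 0 * ?j * (1 / jbr \<xi>) ^ cnt (snd e)"
              using C2 px by (smt (verit, best) mult_right_mono zero_le_power mult_nonneg_nonneg jbr_nonneg divide_nonneg_nonneg zero_le_one)
            have "cmod (iter_dirderiv Pz (fst e) p * iter_dirderiv ?cP (snd e) p) \<le>
                  (max C1 0 * ?j * (1 / jbr \<xi>) ^ cnt (fst e)) * (max C2 0 * ?j * (1 / jbr \<xi>) ^ cnt (snd e))"
              unfolding norm_mult by (rule mult_mono[OF a1 a2]) (auto intro!: mult_nonneg_nonneg)
            also have "\<dots> = (max C1 0 * max C2 0) * (?j * ?j * ?h)" unfolding cn[symmetric]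
              by (simp add: power_add algebra_simps)
            also have "\<dots> \<le> ?c * (?j * ?j * ?h)" using c0 h0 by (intro mult_right_mono) auto
            also have "\<dots> \<le> ?c * ?G p" unfolding Gp using h0 c0 l2
              by (intro mult_left_mono) (auto simp: distrib_right intro!: mult_nonneg_nonneg)
            finally show ?thesis .
          qed
        qed
        then show "cmod (iter_dirderiv Pz (fst e) p * iter_dirderiv ?cP (snd e) p) \<le> ?c * ?G p * 1 ^ 0" by simp
      qed
    qed
  qed
  then obtain c J where cJ: "\<forall>p\<in>K \<times> UNIV. cmod (\<Sum>e\<leftarrow>splits ws. iter_dirderiv Pz (fst e) p * iter_dirderiv ?cP (snd e) p) \<le> c * ?G p * 1 ^ J"
    by blast
  show ?thesis
  proof (intro exI[of _ c] ballI allI)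
    fix x and \<xi> :: "real^'n" assume x: "x \<in> K"
    show "cmod (iter_dirderiv Sf ws (x,\<xi>)) \<le> c * ((sqrt (sv (x,\<xi>)) * jbr \<xi> ^ m + (if 2 \<le> length ws then jbr \<xi> ^ (2*m) else 0)) * (1 / jbr \<xi>) ^ cnt ws)"
    proof -
      have 1: "cmod (\<Sum>e\<leftarrow>splits ws. iter_dirderiv Pz (fst e) (x,\<xi>) * iter_dirderiv ?cP (snd e) (x,\<xi>)) \<le> c * ?G (x,\<xi>) * 1 ^ J"
        using cJ x by blast
      have 2: "iter_dirderiv Sf ws (x,\<xi>) = (\<Sum>e\<leftarrow>splits ws. iter_dirderiv Pz (fst e) (x,\<xi>) * iter_dirderiv ?cP (snd e) (x,\<xi>))"
        using L KOS[OF x, of \<xi>] by blast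
      show ?thesis using 1 2 by (simp only: 2 snd_conv power_one mult_1_right)
    qed
  qed
qed

end



definition iL :: "real \<Rightarrow> real \<Rightarrow> real" where
  "iL \<alpha> s = sqrt ((1 + s) / (\<alpha> + s))"

lemma iL_ge1: "0 < \<alpha> \<Longrightarrow> \<alpha> \<le> 1 \<Longrightarrow> 0 \<le> s \<Longrightarrow> iL \<alpha> s \<ge> 1"
  unfolding iL_def by simp

lemma iL_sq: "0 < \<alpha> \<Longrightarrow> 0 \<le> s \<Longrightarrow> (\<alpha> + s) * iL \<alpha> s ^ 2 = 1 + s"
  unfolding iL_def by simp

lemma iL_one: "0 < \<alpha> \<Longrightarrow> 0 \<le> s \<Longrightarrow> (\<alpha> + s) * iL \<alpha> s = sqrt ((\<alpha> + s) * (1 + s))"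
proof -
  assume a: "0 < \<alpha>" "0 \<le> s"
  have "(\<alpha> + s) = sqrt ((\<alpha> + s)^2)" using a by simp
  then have "(\<alpha> + s) * iL \<alpha> s = sqrt ((\<alpha> + s)^2 * ((1 + s) / (\<alpha> + s)))"
    unfolding iL_def by (metis real_sqrt_mult)
  also have "(\<alpha> + s)^2 * ((1 + s) / (\<alpha> + s)) = (\<alpha> + s) * (1 + s)" using a by (simp add: power2_eq_square)
  finally show ?thesis .
qed

lemma Lam_powr: "0 < \<alpha> \<Longrightarrow> 0 \<le> s \<Longrightarrow> Lam \<alpha> s powr (- real k) = iL \<alpha> s ^ k"
proof -
  assume a: "0 < \<alpha>" "0 \<le> s"
  have p: "Lam \<alpha> s > 0" unfolding Lam_def using a by simp
  have "Lam \<alpha> s powr (- real k) = inverse (Lam \<alpha> s ^ k)" using p by (simp add: powr_minus powr_realpow)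
  also have "\<dots> = (inverse (Lam \<alpha> s)) ^ k" by (simp add: power_inverse)
  also have "inverse (Lam \<alpha> s) = iL \<alpha> s" unfolding Lam_def iL_def using a by (simp add: real_sqrt_inverse[symmetric])
  finally show ?thesis .
qed

lemma key_ineq1:
  assumes a: "0 < \<alpha>" "0 \<le> s" "0 \<le> E" "J \<ge> 0" "J^2 \<le> E * (1 + s)"
  shows "sqrt s * J \<le> sqrt E * ((\<alpha> + s) * iL \<alpha> s)"
proof -
  have "sqrt s * J = sqrt (s * J^2)" using a by (simp add: real_sqrt_mult)
  also have "\<dots> \<le> sqrt (E * ((\<alpha> + s) * (1 + s)))"
  proof (rule real_sqrt_le_mono)
    have "s * J^2 \<le> s * (E * (1 + s))" using a by (intro mult_left_mono) auto
    also have "\<dots> \<le> E * ((\<alpha> + s) * (1 + s))" using a by (simp add: algebra_simps mult_nonneg_nonneg)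
    finally show "s * J^2 \<le> E * ((\<alpha> + s) * (1 + s))" .
  qed
  also have "\<dots> = sqrt E * ((\<alpha> + s) * iL \<alpha> s)" using iL_one[OF a(1,2)] by (simp add: real_sqrt_mult)
  finally show ?thesis .
qed

context ctx2 begin

definition Tf :: "real \<Rightarrow> (real^'n) \<times> (real^'n) \<Rightarrow> complex" where
  "Tf \<alpha> p = complex_of_real (1 / \<alpha>) * Sf p"

lemma smooth_Tf: "smooth_on OS (Tf \<alpha>)"
  unfolding Tf_def[abs_def] by (rule smooth_cmult[OF openOS smooth_Sf])

lemma Tf_real: "Tf \<alpha> p = complex_of_real (sv p / \<alpha>)"
  unfolding Tf_def Sf_real by simp

lemma Tf_bound:
  assumes ne: "ws \<noteq> []" and ws: "set ws \<subseteq> Dirs"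
  shows "\<exists>M\<ge>0. \<forall>\<alpha>. 0 < \<alpha> \<and> \<alpha> < 1 \<longrightarrow> (\<forall>x\<in>K. \<forall>\<xi>::real^'n. cmod (iter_dirderiv (Tf \<alpha>) ws (x,\<xi>)) \<le>
     M * (1 + sv (x,\<xi>) / \<alpha>) * iL \<alpha> (sv (x,\<xi>)) ^ length ws * (1 / jbr \<xi>) ^ cnt ws)"
proof -
  obtain M0 where M0: "\<forall>x\<in>K. \<forall>\<xi>::real^'n. cmod (iter_dirderiv Sf ws (x,\<xi>)) \<le>
     M0 * ((sqrt (sv (x,\<xi>)) * jbr \<xi> ^ m + (if 2 \<le> length ws then jbr \<xi> ^ (2*m) else 0)) * (1 / jbr \<xi>) ^ cnt ws)"
    using Sf_bound[OF ne ws] by blast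
  obtain E where E: "E > 0" "\<forall>x\<in>K. \<forall>\<xi>. jbr \<xi> ^ (2*m) \<le> E * (1 + sfun a m z x \<xi>)" using ellip_bound by blast
  let ?M = "max M0 0 * (sqrt E + E)"
  show ?thesis
  proof (intro exI[of _ ?M] conjI allI impI ballI)
    show "0 \<le> ?M" using E by simp
    fix \<alpha> :: real and x and \<xi> :: "real^'n" assume al: "0 < \<alpha> \<and> \<alpha> < 1" and x: "x \<in> K"
    let ?s = "sv (x,\<xi>)" and ?j = "jbr \<xi> ^ m" and ?h = "(1 / jbr \<xi>) ^ cnt ws" and ?k = "length ws"
    let ?i = "iL \<alpha> ?s"
    have s0: "0 \<le> ?s" by (rule sv_nonneg)
    have i1: "?i \<ge> 1" using iL_ge1[of \<alpha> ?s] al s0 by simp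
    have k1: "?k \<ge> 1" using ne by (cases ws) auto
    have j2: "?j^2 \<le> E * (1 + ?s)" using E(2) x by (simp add: sv_def power_mult[symmetric] mult.commute)
    have h0: "0 \<le> ?h" by simp
    have ik: "?i \<le> ?i ^ ?k" using i1 k1 by (metis power_increasing power_one_right one_le_power le_numeral_extra(4))
    have as0: "0 \<le> \<alpha> + ?s" using al s0 by simp
    have A: "sqrt ?s * ?j \<le> sqrt E * ((\<alpha> + ?s) * ?i ^ ?k)"
    proof -
      have "sqrt ?s * ?j \<le> sqrt E * ((\<alpha> + ?s) * ?i)" by (rule key_ineq1) (use al s0 E j2 in auto)
      also have "\<dots> \<le> sqrt E * ((\<alpha> + ?s) * ?i ^ ?k)" using ik as0 E(1) by (intro mult_left_mono) auto
      finally show ?thesis .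
    qed
    have B: "(if 2 \<le> ?k then jbr \<xi> ^ (2*m) else 0) \<le> E * ((\<alpha> + ?s) * ?i ^ ?k)"
    proof (cases "2 \<le> ?k")
      case True
      have "jbr \<xi> ^ (2*m) \<le> E * (1 + ?s)" using E(2) x by (simp add: sv_def)
      also have "\<dots> = E * ((\<alpha> + ?s) * ?i ^ 2)" using iL_sq[of \<alpha> ?s] al s0 by simp
      also have "\<dots> \<le> E * ((\<alpha> + ?s) * ?i ^ ?k)" using True i1 as0 E(1)
        by (intro mult_left_mono power_increasing) (auto intro: power_increasing)
      finally show ?thesis using True by simp
    next
      case False then show ?thesis using E(1) as0 i1 by simp
    qed
    have AB: "sqrt ?s * ?j + (if 2 \<le> ?k then jbr \<xi> ^ (2*m) else 0) \<le> (sqrt E + E) * ((\<alpha> + ?s) * ?i ^ ?k)"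
      using A B by (simp add: algebra_simps)
    have "iter_dirderiv (Tf \<alpha>) ws (x,\<xi>) = complex_of_real (1/\<alpha>) * iter_dirderiv Sf ws (x,\<xi>)"
      unfolding Tf_def[abs_def] by (rule iter_cmult[OF openOS smooth_Sf KOS[OF x]])
    then have "cmod (iter_dirderiv (Tf \<alpha>) ws (x,\<xi>)) = (1/\<alpha>) * cmod (iter_dirderiv Sf ws (x,\<xi>))"
      using al by (simp add: norm_mult norm_divide)
    also have "\<dots> \<le> (1/\<alpha>) * (max M0 0 * ((sqrt ?s * ?j + (if 2 \<le> ?k then jbr \<xi> ^ (2*m) else 0)) * ?h))"
    proof (rule mult_left_mono)
      have "cmod (iter_dirderiv Sf ws (x,\<xi>)) \<le> M0 * ((sqrt ?s * ?j + (if 2 \<le> ?k then jbr \<xi> ^ (2*m) else 0)) * ?h)"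
        using M0 x by blast
      moreover have "0 \<le> (sqrt ?s * ?j + (if 2 \<le> ?k then jbr \<xi> ^ (2*m) else 0)) * ?h" using s0 by simp
      ultimately show "cmod (iter_dirderiv Sf ws (x,\<xi>)) \<le> max M0 0 * ((sqrt ?s * ?j + (if 2 \<le> ?k then jbr \<xi> ^ (2*m) else 0)) * ?h)"
        by (smt (verit) mult_right_mono)
    qed (use al in simp)
    also have "\<dots> \<le> (1/\<alpha>) * (max M0 0 * (((sqrt E + E) * ((\<alpha> + ?s) * ?i ^ ?k)) * ?h))"
      using AB h0 al by (intro mult_left_mono mult_right_mono) auto
    also have "\<dots> = ?M * ((\<alpha> + ?s) / \<alpha>) * ?i ^ ?k * ?h" by (simp add: field_simps)
    also have "(\<alpha> + ?s) / \<alpha> = 1 + ?s / \<alpha>" using al by (simp add: field_simps)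
    finally show "cmod (iter_dirderiv (Tf \<alpha>) ws (x,\<xi>)) \<le> ?M * (1 + ?s / \<alpha>) * ?i ^ ?k * ?h" .
  qed
qed

end



lemma base_bound:
  fixes w :: complex and t l C0 :: real
  assumes t: "t \<ge> 0" and w: "cmod w \<le> C0" "Im w \<noteq> 0"
  shows "cmod ((w - of_real t) powr of_real l) \<le> (3 + 2*C0) powr \<bar>l\<bar> * (1 + t) powr l * (1 + 1/\<bar>Im w\<bar>) ^ nat \<lceil>\<bar>l\<bar>\<rceil>"
proof -
  define u where "u = w - of_real t"
  define Y where "Y = 1 + 1/\<bar>Im w\<bar>"
  define D where "D = 3 + 2*C0"
  define J where "J = nat \<lceil>\<bar>l\<bar>\<rceil>"
  have C0: "C0 \<ge> 0" using w(1) norm_ge_zero order_trans by blast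
  have n: "cmod (u powr of_real l) = cmod u powr l" by (simp add: norm_powr_real_powr')
  have imu: "Im u = Im w" unfolding u_def by simp
  have im0: "\<bar>Im w\<bar> > 0" using w by simp
  have u0: "cmod u \<ge> \<bar>Im w\<bar>" using abs_Im_le_cmod[of u] imu by simp
  have up: "cmod u > 0" using u0 im0 by linarith
  have Y1: "Y \<ge> 1" unfolding Y_def by simp
  have YJ: "Y powr \<bar>l\<bar> \<le> Y ^ J"
  proof -
    have "Y powr \<bar>l\<bar> \<le> Y powr (real J)" unfolding J_def by (rule powr_mono[OF _ Y1]) linarith
    also have "\<dots> = Y ^ J" using Y1 by (simp add: powr_realpow)
    finally show ?thesis .
  qed
  have YJ1: "1 \<le> Y ^ J" using Y1 by simp
  have D1: "D \<ge> 3" unfolding D_def using C0 by simp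
  have Dp: "D powr \<bar>l\<bar> \<ge> 1" using D1 by (simp add: ge_one_powr_ge_zero)
  have tp: "(1 + t) powr l \<ge> 0" by simp
  have "cmod u powr l \<le> D powr \<bar>l\<bar> * (1 + t) powr l * Y ^ J"
  proof (cases "l \<ge> 0")
    case True
    have "cmod u \<le> cmod w + cmod (complex_of_real t)" unfolding u_def by (rule norm_triangle_ineq4)
    also have "\<dots> \<le> C0 + t" using w t by simp
    also have "\<dots> \<le> D * (1 + t)" unfolding D_def using C0 t by (simp add: algebra_simps)
    finally have "cmod u powr l \<le> (D * (1 + t)) powr l" using True by (intro powr_mono2) auto
    also have "\<dots> = D powr \<bar>l\<bar> * (1 + t) powr l" using True D1 t by (simp add: powr_mult)
    also have "\<dots> \<le> D powr \<bar>l\<bar> * (1 + t) powr l * Y ^ J"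
      using YJ1 tp Dp mult_left_mono[of 1 "Y^J" "D powr \<bar>l\<bar> * (1 + t) powr l"] by simp
    finally show ?thesis .
  next
    case False
    have Yu1: "Y * cmod u \<ge> 1 + cmod u"
    proof -
      have "cmod u / \<bar>Im w\<bar> \<ge> 1" using u0 im0 by simp
      then show ?thesis unfolding Y_def by (simp add: algebra_simps)
    qed
    have key: "1 + t \<le> D * (Y * cmod u)"
    proof (cases "t \<ge> 2 * C0")
      case True
      have "t = cmod (complex_of_real t)" using t by simp
      also have "complex_of_real t = w - u" unfolding u_def by simp
      also have "cmod (w - u) \<le> cmod w + cmod u" by (rule norm_triangle_ineq4)
      finally have "t \<le> C0 + cmod u" using w by simp
      then have "t \<le> 2 * cmod u" using True by simp
      moreover have "0 \<le> Y * cmod u" using Yu1 up by linarith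
      moreover have "3 * (Y * cmod u) \<le> D * (Y * cmod u)" using D1 \<open>0 \<le> Y * cmod u\<close> by (intro mult_right_mono) auto
      ultimately show ?thesis using Yu1 by linarith
    next
      case False
      then have "1 + t \<le> D" unfolding D_def by simp
      also have "\<dots> \<le> D * (Y * cmod u)"
      proof -
        have "1 \<le> Y * cmod u" using Yu1 norm_ge_zero[of u] by linarith
        then show ?thesis using D1 by (simp add: mult_le_cancel_left1)
      qed
      finally show ?thesis .
    qed
    have DYp: "D * Y > 0" using D1 Y1 by simp
    have q0: "(1 + t) / (D * Y) > 0" using t DYp by simp
    have q1: "(1 + t) / (D * Y) \<le> cmod u" using key DYp by (simp add: field_simps)
    have "cmod u powr l \<le> ((1 + t) / (D * Y)) powr l" using False q0 q1 by (intro powr_mono2') auto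
    also have "\<dots> = (1 + t) powr l * (D powr \<bar>l\<bar> * Y powr \<bar>l\<bar>)"
    proof -
      have "((1 + t) / (D * Y)) powr l = (1 + t) powr l / (D * Y) powr l" by (rule powr_divide)
      also have "1 / (D * Y) powr l = (D * Y) powr (- l)" by (simp add: powr_minus_divide)
      then have "(1 + t) powr l / (D * Y) powr l = (1 + t) powr l * (D * Y) powr (- l)"
        by (metis times_divide_eq_right mult_1_right)
      also have "- l = \<bar>l\<bar>" using False by simp
      also have "(D * Y) powr \<bar>l\<bar> = D powr \<bar>l\<bar> * Y powr \<bar>l\<bar>" by (rule powr_mult)
      finally show ?thesis .
    qed
    also have "\<dots> \<le> (1 + t) powr l * (D powr \<bar>l\<bar> * Y ^ J)" using YJ tp Dp by (intro mult_left_mono) auto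
    finally show ?thesis by (simp add: algebra_simps)
  qed
  then show ?thesis using n unfolding u_def Y_def D_def J_def by simp
qed

context ctx2 begin

definition F :: "real \<Rightarrow> real \<Rightarrow> complex \<Rightarrow> (real^'n) \<times> (real^'n) \<Rightarrow> complex" where
  "F l \<alpha> w p = (w - Tf \<alpha> p) powr complex_of_real l"

lemma F_diff_deriv:
  assumes p: "p \<in> OS" and w: "Im w \<noteq> 0"
  shows "F l \<alpha> w differentiable (at p)"
    and "dirderiv (F l \<alpha> w) v p = F (l - 1) \<alpha> w p * (complex_of_real l * - dirderiv (Tf \<alpha>) v p)"
proof -
  have dT: "Tf \<alpha> differentiable (at p)" using diffon_at[OF openOS smooth_diffon[OF smooth_Tf[of \<alpha>], of "[]"] p] by simp
  then obtain T' where T': "(Tf \<alpha> has_derivative T') (at p)" unfolding differentiable_def by blast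
  have du: "((\<lambda>y. w - Tf \<alpha> y) has_derivative (\<lambda>h. 0 - T' h)) (at p)"
    by (rule has_derivative_diff[OF has_derivative_const T'])
  then have du': "(\<lambda>y. w - Tf \<alpha> y) differentiable (at p)" unfolding differentiable_def by blast
  have nr: "w - Tf \<alpha> p \<notin> \<real>\<^sub>\<le>\<^sub>0" using w by (simp add: complex_nonpos_Reals_iff Tf_real)
  have h: "((\<lambda>z. z powr complex_of_real l) has_field_derivative (complex_of_real l * (w - Tf \<alpha> p) powr (complex_of_real l - 1))) (at (w - Tf \<alpha> p))"
    by (rule has_field_derivative_powr[OF nr])
  show "F l \<alpha> w differentiable (at p)"
  proof -
    have "(\<lambda>z. z powr complex_of_real l) differentiable (at (w - Tf \<alpha> p))"
      using h field_differentiable_imp_differentiable field_differentiable_def by blast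
    from differentiable_chain_at[OF du' this] show ?thesis unfolding F_def[abs_def] by (simp add: o_def)
  qed
  have "dirderiv (F l \<alpha> w) v p = complex_of_real l * (w - Tf \<alpha> p) powr (complex_of_real l - 1) * dirderiv (\<lambda>y. w - Tf \<alpha> y) v p"
    unfolding F_def[abs_def] by (rule dirderiv_chain[OF du' h])
  also have "dirderiv (\<lambda>y. w - Tf \<alpha> y) v p = - dirderiv (Tf \<alpha>) v p"
    using dirderiv_has[OF du] dirderiv_has[OF T'] by simp
  also have "complex_of_real l - 1 = complex_of_real (l - 1)" by simp
  finally show "dirderiv (F l \<alpha> w) v p = F (l - 1) \<alpha> w p * (complex_of_real l * - dirderiv (Tf \<alpha>) v p)"
    unfolding F_def by (simp add: algebra_simps)
qed

end



context ctx2 begin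

definition bnd :: "real \<Rightarrow> real \<Rightarrow> complex \<Rightarrow> ((real^'n) \<times> (real^'n)) list \<Rightarrow> (real^'n) \<times> (real^'n) \<Rightarrow> real" where
  "bnd l \<alpha> w vs p = (1 + sv p / \<alpha>) powr l * iL \<alpha> (sv p) ^ length vs * (1 / jbr (snd p)) ^ cnt vs
      * (1 + 1 / \<bar>Im w\<bar>) ^ (nat \<lceil>\<bar>l\<bar>\<rceil> + length vs)"

lemma bnd_nonneg: "0 < \<alpha> \<Longrightarrow> 0 \<le> bnd l \<alpha> w vs p"
  unfolding bnd_def iL_def using sv_nonneg[of p] by (auto intro!: mult_nonneg_nonneg)

lemma bnd_split:
  assumes al: "0 < \<alpha>" "\<alpha> < 1" and ms: "mset A + mset B = mset vs'" and vs: "vs = vs' @ [v]"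
  shows "bnd (l - 1) \<alpha> w A p * ((1 + sv p / \<alpha>) * iL \<alpha> (sv p) ^ length (B @ [v]) * (1 / jbr (snd p)) ^ cnt (B @ [v]))
         \<le> bnd l \<alpha> w vs p"
proof -
  let ?t = "sv p / \<alpha>" and ?i = "iL \<alpha> (sv p)" and ?h = "1 / jbr (snd p)" and ?Y = "1 + 1 / \<bar>Im w\<bar>"
  have t0: "0 \<le> ?t" using sv_nonneg[of p] al by simp
  have len: "length A + length (B @ [v]) = length vs"
  proof -
    have "length A + length B = length vs'" using arg_cong[OF ms, of size] by simp
    then show ?thesis using vs by simp
  qed
  have cn: "cnt A + cnt (B @ [v]) = cnt vs" using cnt_mset[OF ms] vs by (simp add: cnt_append)
  have w1: "(1 + ?t) powr (l - 1) * (1 + ?t) = (1 + ?t) powr l"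
  proof -
    have "(1 + ?t) powr (l - 1) * (1 + ?t) powr 1 = (1 + ?t) powr (l - 1 + 1)" by (rule powr_add[symmetric])
    then show ?thesis using t0 by simp
  qed
  have J: "nat \<lceil>\<bar>l - 1\<bar>\<rceil> + length A \<le> nat \<lceil>\<bar>l\<bar>\<rceil> + length vs"
  proof -
    have "\<lceil>\<bar>l - 1\<bar>\<rceil> \<le> \<lceil>\<bar>l\<bar>\<rceil> + 1" by (simp add: ceiling_le_iff) linarith
    then have "nat \<lceil>\<bar>l - 1\<bar>\<rceil> \<le> nat \<lceil>\<bar>l\<bar>\<rceil> + 1" by linarith
    moreover have "length A + 1 \<le> length vs" using len by simp
    ultimately show ?thesis by linarith
  qed
  have Y1: "?Y \<ge> 1" by simp
  have YJ: "?Y ^ (nat \<lceil>\<bar>l - 1\<bar>\<rceil> + length A) \<le> ?Y ^ (nat \<lceil>\<bar>l\<bar>\<rceil> + length vs)"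
    by (rule power_increasing[OF J]) simp
  have "bnd (l - 1) \<alpha> w A p * ((1 + ?t) * ?i ^ length (B @ [v]) * ?h ^ cnt (B @ [v]))
     = ((1 + ?t) powr (l - 1) * (1 + ?t)) * (?i ^ length A * ?i ^ length (B @ [v])) * (?h ^ cnt A * ?h ^ cnt (B @ [v]))
       * ?Y ^ (nat \<lceil>\<bar>l - 1\<bar>\<rceil> + length A)"
    unfolding bnd_def by (simp only: mult_ac)
  also have "\<dots> = (1 + ?t) powr l * ?i ^ length vs * ?h ^ cnt vs * ?Y ^ (nat \<lceil>\<bar>l - 1\<bar>\<rceil> + length A)"
    by (simp only: w1 power_add[symmetric] len cn)
  also have "\<dots> \<le> (1 + ?t) powr l * ?i ^ length vs * ?h ^ cnt vs * ?Y ^ (nat \<lceil>\<bar>l\<bar>\<rceil> + length vs)"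
    using YJ iL_ge1[of \<alpha> "sv p"] al sv_nonneg[of p] by (intro mult_left_mono) (auto intro!: mult_nonneg_nonneg)
  also have "\<dots> = bnd l \<alpha> w vs p" unfolding bnd_def by simp
  finally show ?thesis .
qed

end



context ctx2 begin

lemma iter_Tf_snoc: "iter_dirderiv (Tf \<alpha>) (B @ [v]) = iter_dirderiv (dirderiv (Tf \<alpha>) v) B"
  by (simp add: iter_append)

lemma smooth_dTf: "smooth_on OS (dirderiv (Tf \<alpha>) v)"
  using smooth_iter[OF smooth_Tf[of \<alpha>], of "[v]"] by simp

lemma main:
  fixes C0 :: real
  shows "\<forall>l vs. length vs = n \<longrightarrow>
     (\<forall>\<alpha> w. Im w \<noteq> 0 \<longrightarrow> iter_dirderiv (F l \<alpha> w) vs differentiable_on OS) \<and>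
     (set vs \<subseteq> Dirs \<longrightarrow> (\<exists>B. \<forall>\<alpha> w. 0 < \<alpha> \<and> \<alpha> < 1 \<and> cmod w \<le> C0 \<and> Im w \<noteq> 0 \<longrightarrow>
        (\<forall>x\<in>K. \<forall>\<xi>::real^'n. cmod (iter_dirderiv (F l \<alpha> w) vs (x,\<xi>)) \<le> B * bnd l \<alpha> w vs (x,\<xi>))))"
proof (induction n rule: less_induct)
  case (less n)
  show ?case
  proof (intro allI impI)
    fix l :: real and vs :: "((real^'n) \<times> (real^'n)) list" assume len: "length vs = n"
    show "(\<forall>\<alpha> w. Im w \<noteq> 0 \<longrightarrow> iter_dirderiv (F l \<alpha> w) vs differentiable_on OS) \<and>
     (set vs \<subseteq> Dirs \<longrightarrow> (\<exists>B. \<forall>\<alpha> w. 0 < \<alpha> \<and> \<alpha> < 1 \<and> cmod w \<le> C0 \<and> Im w \<noteq> 0 \<longrightarrow>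
        (\<forall>x\<in>K. \<forall>\<xi>::real^'n. cmod (iter_dirderiv (F l \<alpha> w) vs (x,\<xi>)) \<le> B * bnd l \<alpha> w vs (x,\<xi>))))"
    proof (cases vs rule: rev_cases)
      case Nil
      show ?thesis
      proof (intro conjI allI impI)
        fix \<alpha> :: real and w :: complex assume w: "Im w \<noteq> 0"
        show "iter_dirderiv (F l \<alpha> w) vs differentiable_on OS"
          unfolding Nil differentiable_on_eq_differentiable_at[OF openOS]
          using F_diff_deriv(1)[OF _ w] by simp
      next
        show "\<exists>B. \<forall>\<alpha> w. 0 < \<alpha> \<and> \<alpha> < 1 \<and> cmod w \<le> C0 \<and> Im w \<noteq> 0 \<longrightarrow>
          (\<forall>x\<in>K. \<forall>\<xi>::real^'n. cmod (iter_dirderiv (F l \<alpha> w) vs (x,\<xi>)) \<le> B * bnd l \<alpha> w vs (x,\<xi>))"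
        proof (intro exI[of _ "(3 + 2*C0) powr \<bar>l\<bar>"] allI impI ballI)
          fix \<alpha> :: real and w :: complex and x and \<xi> :: "real^'n"
          assume q: "0 < \<alpha> \<and> \<alpha> < 1 \<and> cmod w \<le> C0 \<and> Im w \<noteq> 0" and x: "x \<in> K"
          have t0: "0 \<le> sv (x,\<xi>) / \<alpha>" using sv_nonneg q by simp
          have "cmod (F l \<alpha> w (x,\<xi>)) \<le> (3 + 2*C0) powr \<bar>l\<bar> * (1 + sv (x,\<xi>) / \<alpha>) powr l * (1 + 1/\<bar>Im w\<bar>) ^ nat \<lceil>\<bar>l\<bar>\<rceil>"
            unfolding F_def Tf_real using base_bound[OF t0, of w C0 l] q by simp
          then show "cmod (iter_dirderiv (F l \<alpha> w) vs (x,\<xi>)) \<le> (3 + 2*C0) powr \<bar>l\<bar> * bnd l \<alpha> w vs (x,\<xi>)"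
            unfolding Nil bnd_def by (simp add: cnt_def mult.assoc)
        qed
      qed
    next
      case (snoc vs' v)
      have lt: "length vs' < n" using len snoc by simp
      have IH: "\<And>ws. length ws \<le> length vs' \<Longrightarrow>
         (\<forall>\<alpha> w. Im w \<noteq> 0 \<longrightarrow> iter_dirderiv (F (l - 1) \<alpha> w) ws differentiable_on OS) \<and>
         (set ws \<subseteq> Dirs \<longrightarrow> (\<exists>B. \<forall>\<alpha> w. 0 < \<alpha> \<and> \<alpha> < 1 \<and> cmod w \<le> C0 \<and> Im w \<noteq> 0 \<longrightarrow>
            (\<forall>x\<in>K. \<forall>\<xi>::real^'n. cmod (iter_dirderiv (F (l - 1) \<alpha> w) ws (x,\<xi>)) \<le> B * bnd (l - 1) \<alpha> w ws (x,\<xi>))))"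
      proof -
        fix ws :: "((real^'n) \<times> (real^'n)) list" assume "length ws \<le> length vs'"
        then have "length ws < n" using lt by simp
        from less.IH[OF this, rule_format, of ws "l - 1"] show "?thesis ws" by simp
      qed
      define G where "G \<alpha> y = complex_of_real (- l) * dirderiv (Tf \<alpha>) v y" for \<alpha> y
      have sG: "smooth_on OS (G \<alpha>)" for \<alpha>
        unfolding G_def[abs_def] by (rule smooth_cmult[OF openOS smooth_dTf])
      have eq: "iter_dirderiv (F l \<alpha> w) vs p = iter_dirderiv (\<lambda>y. F (l - 1) \<alpha> w y * G \<alpha> y) vs' p"
        if w: "Im w \<noteq> 0" and p: "p \<in> OS" for \<alpha> w p
      proof -
        have "iter_dirderiv (F l \<alpha> w) vs p = iter_dirderiv (dirderiv (F l \<alpha> w) v) vs' p"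
          unfolding snoc by (simp add: iter_append)
        also have "\<dots> = iter_dirderiv (\<lambda>y. F (l - 1) \<alpha> w y * G \<alpha> y) vs' p"
        proof (rule iter_local[OF openOS p])
          fix y assume "y \<in> OS"
          from F_diff_deriv(2)[OF this w] show "dirderiv (F l \<alpha> w) v y = F (l - 1) \<alpha> w y * G \<alpha> y"
            unfolding G_def by simp
        qed
        finally show ?thesis .
      qed
      have LB: "\<forall>p\<in>OS. iter_dirderiv (\<lambda>y. F (l - 1) \<alpha> w y * G \<alpha> y) vs' p =
                 (\<Sum>e\<leftarrow>splits vs'. iter_dirderiv (F (l - 1) \<alpha> w) (fst e) p * iter_dirderiv (G \<alpha>) (snd e) p)"
        if w: "Im w \<noteq> 0" for \<alpha> w
        by (rule leibniz[OF openOS]) (use IH w smooth_diffon[OF sG] in auto)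
      show ?thesis
      proof (intro conjI allI impI)
        fix \<alpha> :: real and w :: complex assume w: "Im w \<noteq> 0"
        have "iter_dirderiv (\<lambda>y. F (l - 1) \<alpha> w y * G \<alpha> y) vs' differentiable_on OS"
          by (rule leibniz_diff[OF openOS _ order_refl]) (use IH w smooth_diffon[OF sG] in auto)
        then show "iter_dirderiv (F l \<alpha> w) vs differentiable_on OS"
          by (rule diffon_cong[rotated]) (rule eq[OF w])
      next
        assume ds: "set vs \<subseteq> Dirs"
        then have ds': "set vs' \<subseteq> Dirs" and dv: "v \<in> Dirs" using snoc by auto
        let ?X = "{(\<alpha>, w, x, \<xi>::real^'n). 0 < \<alpha> \<and> \<alpha> < 1 \<and> cmod w \<le> C0 \<and> Im w \<noteq> 0 \<and> x \<in> K}"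
        let ?T = "\<lambda>e (q :: real \<times> complex \<times> (real^'n) \<times> (real^'n)). case q of (\<alpha>, w, x, \<xi>) \<Rightarrow>
            iter_dirderiv (F (l - 1) \<alpha> w) (fst e) (x,\<xi>) * iter_dirderiv (G \<alpha>) (snd e) (x,\<xi>)"
        let ?W = "\<lambda>q :: real \<times> complex \<times> (real^'n) \<times> (real^'n). case q of (\<alpha>, w, x, \<xi>) \<Rightarrow> bnd l \<alpha> w vs (x,\<xi>)"
        have "\<exists>c J. \<forall>q\<in>?X. cmod (\<Sum>e\<leftarrow>splits vs'. ?T e q) \<le> c * ?W q * 1 ^ J"
        proof (rule sum_list_bound)
          show "\<forall>q\<in>?X. 0 \<le> ?W q" using bnd_nonneg by auto
          show "\<forall>q\<in>?X. (1::real) \<le> 1" by simp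
          show "\<forall>e\<in>set (splits vs'). \<exists>c J. \<forall>q\<in>?X. cmod (?T e q) \<le> c * ?W q * 1 ^ J"
          proof
            fix e assume e: "e \<in> set (splits vs')"
            then have ms: "mset (fst e) + mset (snd e) = mset vs'" using splits_mset[of "fst e" "snd e"] by simp
            then have sub: "set (fst e) \<subseteq> Dirs" "set (snd e) \<subseteq> Dirs" using ds'
              by (metis Un_subset_iff set_mset_mset set_mset_union)+
            have la: "length (fst e) \<le> length vs'" using arg_cong[OF ms, of size] by simp
            obtain BA where BA: "\<forall>\<alpha> w. 0 < \<alpha> \<and> \<alpha> < 1 \<and> cmod w \<le> C0 \<and> Im w \<noteq> 0 \<longrightarrow>
                (\<forall>x\<in>K. \<forall>\<xi>::real^'n. cmod (iter_dirderiv (F (l - 1) \<alpha> w) (fst e) (x,\<xi>)) \<le> BA * bnd (l - 1) \<alpha> w (fst e) (x,\<xi>))"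
              using IH[OF la] sub by blast
            have ne: "snd e @ [v] \<noteq> []" by simp
            have sb: "set (snd e @ [v]) \<subseteq> Dirs" using sub dv by simp
            obtain MB where MB: "MB \<ge> 0" "\<forall>\<alpha>. 0 < \<alpha> \<and> \<alpha> < 1 \<longrightarrow> (\<forall>x\<in>K. \<forall>\<xi>::real^'n. cmod (iter_dirderiv (Tf \<alpha>) (snd e @ [v]) (x,\<xi>)) \<le>
                MB * (1 + sv (x,\<xi>) / \<alpha>) * iL \<alpha> (sv (x,\<xi>)) ^ length (snd e @ [v]) * (1 / jbr \<xi>) ^ cnt (snd e @ [v]))"
              using Tf_bound[OF ne sb] by blast
            show "\<exists>c J. \<forall>q\<in>?X. cmod (?T e q) \<le> c * ?W q * 1 ^ J"
            proof (intro exI[of _ "max BA 0 * (\<bar>l\<bar> * MB)"] exI[of _ 0] ballI)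
              fix q :: "real \<times> complex \<times> (real^'n) \<times> (real^'n)" assume q: "q \<in> ?X"
              obtain \<alpha> w x \<xi> where qq: "q = (\<alpha>, w, x, \<xi>)" by (cases q) auto
              have al: "0 < \<alpha>" "\<alpha> < 1" and wc: "cmod w \<le> C0" "Im w \<noteq> 0" and x: "x \<in> K" using q qq by auto
              let ?p = "(x, \<xi>)"
              let ?R = "(1 + sv ?p / \<alpha>) * iL \<alpha> (sv ?p) ^ length (snd e @ [v]) * (1 / jbr (snd ?p)) ^ cnt (snd e @ [v])"
              have R0: "0 \<le> ?R" using sv_nonneg[of ?p] al iL_ge1[of \<alpha> "sv ?p"] by (auto intro!: mult_nonneg_nonneg)
              have b0: "0 \<le> bnd (l - 1) \<alpha> w (fst e) ?p" by (rule bnd_nonneg[OF al(1)])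
              have a1: "cmod (iter_dirderiv (F (l - 1) \<alpha> w) (fst e) ?p) \<le> max BA 0 * bnd (l - 1) \<alpha> w (fst e) ?p"
              proof -
                have "cmod (iter_dirderiv (F (l - 1) \<alpha> w) (fst e) ?p) \<le> BA * bnd (l - 1) \<alpha> w (fst e) ?p"
                  using BA al wc x by blast
                also have "\<dots> \<le> max BA 0 * bnd (l - 1) \<alpha> w (fst e) ?p" using b0 by (intro mult_right_mono) auto
                finally show ?thesis .
              qed
              have iG: "iter_dirderiv (G \<alpha>) (snd e) ?p = complex_of_real (- l) * iter_dirderiv (Tf \<alpha>) (snd e @ [v]) ?p"
                unfolding G_def[abs_def] iter_Tf_snoc by (rule iter_cmult[OF openOS smooth_dTf KOS[OF x]])
              have a2: "cmod (iter_dirderiv (G \<alpha>) (snd e) ?p) \<le> \<bar>l\<bar> * (MB * ?R)"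
              proof -
                have "cmod (iter_dirderiv (Tf \<alpha>) (snd e @ [v]) ?p) \<le> MB * ?R"
                  using MB(2) al x by (simp add: mult.assoc)
                moreover have "cmod (complex_of_real (- l)) = \<bar>l\<bar>" by simp
                ultimately show ?thesis unfolding iG norm_mult by (simp add: mult_left_mono)
              qed
              have "cmod (?T e q) = cmod (iter_dirderiv (F (l - 1) \<alpha> w) (fst e) ?p) * cmod (iter_dirderiv (G \<alpha>) (snd e) ?p)"
                using qq by (simp add: norm_mult)
              also have "\<dots> \<le> (max BA 0 * bnd (l - 1) \<alpha> w (fst e) ?p) * (\<bar>l\<bar> * (MB * ?R))"
                by (rule mult_mono[OF a1 a2]) (use b0 in auto)
              also have "\<dots> = (max BA 0 * (\<bar>l\<bar> * MB)) * (bnd (l - 1) \<alpha> w (fst e) ?p * ?R)" by (simp add: algebra_simps)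
              also have "\<dots> \<le> (max BA 0 * (\<bar>l\<bar> * MB)) * bnd l \<alpha> w vs ?p"
                using bnd_split[OF al ms snoc] MB(1) by (intro mult_left_mono) auto
              finally show "cmod (?T e q) \<le> max BA 0 * (\<bar>l\<bar> * MB) * ?W q * 1 ^ 0" using qq by simp
            qed
          qed
        qed
        then obtain c J where cJ: "\<forall>q\<in>?X. cmod (\<Sum>e\<leftarrow>splits vs'. ?T e q) \<le> c * ?W q * 1 ^ J" by blast
        show "\<exists>B. \<forall>\<alpha> w. 0 < \<alpha> \<and> \<alpha> < 1 \<and> cmod w \<le> C0 \<and> Im w \<noteq> 0 \<longrightarrow>
          (\<forall>x\<in>K. \<forall>\<xi>::real^'n. cmod (iter_dirderiv (F l \<alpha> w) vs (x,\<xi>)) \<le> B * bnd l \<alpha> w vs (x,\<xi>))"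
        proof (intro exI[of _ c] allI impI ballI)
          fix \<alpha> :: real and w :: complex and x and \<xi> :: "real^'n"
          assume q: "0 < \<alpha> \<and> \<alpha> < 1 \<and> cmod w \<le> C0 \<and> Im w \<noteq> 0" and x: "x \<in> K"
          have qX: "(\<alpha>, w, x, \<xi>) \<in> ?X" using q x by simp
          have "iter_dirderiv (F l \<alpha> w) vs (x,\<xi>) = (\<Sum>e\<leftarrow>splits vs'. ?T e (\<alpha>, w, x, \<xi>))"
            using eq[of w "(x,\<xi>)" \<alpha>] LB[of w \<alpha>] q KOS[OF x, of \<xi>] by simp
          then show "cmod (iter_dirderiv (F l \<alpha> w) vs (x,\<xi>)) \<le> c * bnd l \<alpha> w vs (x,\<xi>)"
            using cJ qX by simp
        qed
      qed
    qed
  qed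
qed

end



theorem proposition4p2:
  fixes a :: "('n::finite \<Rightarrow> nat) \<Rightarrow> real^'n \<Rightarrow> complex"
    and m :: nat and U :: "(real^'n) set" and z :: complex and C0 :: real
  assumes "open U"
    and "\<forall>\<beta>. smooth_on U (a \<beta>)"
    and "\<forall>K. compact K \<and> K \<subseteq> U \<longrightarrow>
           (\<exists>C>0. \<forall>x\<in>K. \<forall>\<xi>. cmod (princ a m x \<xi>) \<ge> norm \<xi> ^ m / C)"
  shows "\<exists>\<alpha>0>0. \<forall>(l::real) (ds::'n list) (es::'n list). \<exists>J::nat.
           \<forall>K. compact K \<and> K \<subseteq> U \<longrightarrow>
             (\<exists>B. \<forall>x\<in>K. \<forall>\<xi>. \<forall>\<alpha>. 0 < \<alpha> \<and> \<alpha> < \<alpha>0 \<longrightarrow>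
               (\<forall>w. cmod w \<le> C0 \<and> Im w \<noteq> 0 \<longrightarrow>
                 cmod (iter_dirderiv
                    (\<lambda>(y, \<eta>). (w - complex_of_real (sfun a m z y \<eta> / \<alpha>)) powr complex_of_real l)
                    (map dx ds @ map dxi es) (x, \<xi>))
                 \<le> B * (1 + sfun a m z x \<xi> / \<alpha>) powr l
                     * Lam \<alpha> (sfun a m z x \<xi>) powr (- real (length ds + length es))
                     * jbr \<xi> powr (- real (length es))
                     * \<bar>Im w\<bar> powr (- real J)))"
proof (intro exI[of _ "1::real"] conjI allI)
  show "(0::real) < 1" by simp
  fix l :: real and ds es :: "'n list"
  define vs where "vs = map dx ds @ map dxi es"
  define J where "J = nat \<lceil>\<bar>l\<bar>\<rceil> + length vs"
  have lv: "length vs = length ds + length es" unfolding vs_def by simp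
  have cv: "cnt vs = length es" unfolding vs_def by (rule cnt_dx_dxi)
  have dv: "set vs \<subseteq> Dirs" unfolding vs_def by (rule dirs_in)
  show "\<exists>J::nat. \<forall>K. compact K \<and> K \<subseteq> U \<longrightarrow>
             (\<exists>B. \<forall>x\<in>K. \<forall>\<xi>. \<forall>\<alpha>. 0 < \<alpha> \<and> \<alpha> < 1 \<longrightarrow>
               (\<forall>w. cmod w \<le> C0 \<and> Im w \<noteq> 0 \<longrightarrow>
                 cmod (iter_dirderiv
                    (\<lambda>(y, \<eta>). (w - complex_of_real (sfun a m z y \<eta> / \<alpha>)) powr complex_of_real l)
                    (map dx ds @ map dxi es) (x, \<xi>))
                 \<le> B * (1 + sfun a m z x \<xi> / \<alpha>) powr l
                     * Lam \<alpha> (sfun a m z x \<xi>) powr (- real (length ds + length es))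
                     * jbr \<xi> powr (- real (length es))
                     * \<bar>Im w\<bar> powr (- real J)))"
  proof (intro exI[of _ J] allI impI)
    fix K :: "(real^'n) set" assume K: "compact K \<and> K \<subseteq> U"
    interpret c: ctx2 U K a m z
      using assms K by unfold_locales auto
    obtain B where B: "\<forall>\<alpha> w. 0 < \<alpha> \<and> \<alpha> < 1 \<and> cmod w \<le> C0 \<and> Im w \<noteq> 0 \<longrightarrow>
        (\<forall>x\<in>K. \<forall>\<xi>::real^'n. cmod (iter_dirderiv (c.F l \<alpha> w) vs (x,\<xi>)) \<le> B * c.bnd l \<alpha> w vs (x,\<xi>))"
      using c.main[of "length vs" C0] dv by blast
    show "\<exists>B. \<forall>x\<in>K. \<forall>\<xi>. \<forall>\<alpha>. 0 < \<alpha> \<and> \<alpha> < 1 \<longrightarrow>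
               (\<forall>w. cmod w \<le> C0 \<and> Im w \<noteq> 0 \<longrightarrow>
                 cmod (iter_dirderiv
                    (\<lambda>(y, \<eta>). (w - complex_of_real (sfun a m z y \<eta> / \<alpha>)) powr complex_of_real l)
                    (map dx ds @ map dxi es) (x, \<xi>))
                 \<le> B * (1 + sfun a m z x \<xi> / \<alpha>) powr l
                     * Lam \<alpha> (sfun a m z x \<xi>) powr (- real (length ds + length es))
                     * jbr \<xi> powr (- real (length es))
                     * \<bar>Im w\<bar> powr (- real J))"
    proof (intro exI[of _ "max B 0 * (max C0 0 + 1) ^ J"] ballI allI impI)
      fix x and \<xi> :: "real^'n" and \<alpha> :: real and w :: complex assume x: "x \<in> K" and al: "0 < \<alpha> \<and> \<alpha> < 1" and w: "cmod w \<le> C0 \<and> Im w \<noteq> 0"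
      let ?s = "sfun a m z x \<xi>"
      have s0: "0 \<le> ?s" unfolding sfun_def by simp
      have svx: "c.sv (x,\<xi>) = ?s" unfolding c.sv_def by simp
      have Feq: "(\<lambda>(y, \<eta>). (w - complex_of_real (sfun a m z y \<eta> / \<alpha>)) powr complex_of_real l) = c.F l \<alpha> w"
        unfolding c.F_def[abs_def] c.Tf_real c.sv_def by (simp add: fun_eq_iff)
      have im0: "\<bar>Im w\<bar> > 0" using w by simp
      have imC: "\<bar>Im w\<bar> \<le> max C0 0" using abs_Im_le_cmod[of w] w by linarith
      have Y: "(1 + 1 / \<bar>Im w\<bar>) ^ J \<le> (max C0 0 + 1) ^ J * \<bar>Im w\<bar> powr (- real J)"
      proof -
        have "1 + 1 / \<bar>Im w\<bar> \<le> (max C0 0 + 1) * (1 / \<bar>Im w\<bar>)"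
        proof -
          have "max C0 0 / \<bar>Im w\<bar> \<ge> 1" using imC im0 by simp
          moreover have "(max C0 0 + 1) * (1 / \<bar>Im w\<bar>) = max C0 0 / \<bar>Im w\<bar> + 1 / \<bar>Im w\<bar>"
            by (simp add: add_divide_distrib)
          ultimately show ?thesis by linarith
        qed
        then have "(1 + 1 / \<bar>Im w\<bar>) ^ J \<le> ((max C0 0 + 1) * (1 / \<bar>Im w\<bar>)) ^ J"
          by (intro power_mono) (auto simp: add_nonneg_nonneg)
        also have "\<dots> = (max C0 0 + 1) ^ J * \<bar>Im w\<bar> powr (- real J)"
          using im0 by (simp add: power_mult_distrib powr_minus powr_realpow power_one_over divide_inverse power_inverse)
        finally show ?thesis .
      qed
      have iLe: "iL \<alpha> ?s ^ length vs = Lam \<alpha> ?s powr (- real (length ds + length es))"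
        using Lam_powr[of \<alpha> ?s "length vs"] al s0 lv by simp
      have je: "(1 / jbr \<xi>) ^ cnt vs = jbr \<xi> powr (- real (length es))"
        using cv by (simp add: powr_minus powr_realpow power_one_over divide_inverse power_inverse)
      have P0: "0 \<le> (1 + ?s / \<alpha>) powr l * iL \<alpha> ?s ^ length vs * (1 / jbr \<xi>) ^ cnt vs"
        using al s0 by (auto simp: iL_def intro!: mult_nonneg_nonneg)
      have "cmod (iter_dirderiv (\<lambda>(y, \<eta>). (w - complex_of_real (sfun a m z y \<eta> / \<alpha>)) powr complex_of_real l) vs (x,\<xi>))
            \<le> B * c.bnd l \<alpha> w vs (x,\<xi>)"
        unfolding Feq using B al w x by blast
      also have "\<dots> \<le> max B 0 * c.bnd l \<alpha> w vs (x,\<xi>)" using c.bnd_nonneg[of \<alpha> l w vs "(x,\<xi>)"] al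
        by (intro mult_right_mono) auto
      also have "c.bnd l \<alpha> w vs (x,\<xi>) = ((1 + ?s / \<alpha>) powr l * iL \<alpha> ?s ^ length vs * (1 / jbr \<xi>) ^ cnt vs) * (1 + 1 / \<bar>Im w\<bar>) ^ J"
        unfolding c.bnd_def J_def svx by simp
      also have "max B 0 * (((1 + ?s / \<alpha>) powr l * iL \<alpha> ?s ^ length vs * (1 / jbr \<xi>) ^ cnt vs) * (1 + 1 / \<bar>Im w\<bar>) ^ J)
          \<le> max B 0 * (((1 + ?s / \<alpha>) powr l * iL \<alpha> ?s ^ length vs * (1 / jbr \<xi>) ^ cnt vs) * ((max C0 0 + 1) ^ J * \<bar>Im w\<bar> powr (- real J)))"
        using Y P0 by (intro mult_left_mono) auto
      also have "\<dots> = max B 0 * (max C0 0 + 1) ^ J * (1 + ?s / \<alpha>) powr l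
                     * Lam \<alpha> ?s powr (- real (length ds + length es))
                     * jbr \<xi> powr (- real (length es))
                     * \<bar>Im w\<bar> powr (- real J)"
        unfolding iLe je by (simp only: mult_ac)
      finally show "cmod (iter_dirderiv (\<lambda>(y, \<eta>). (w - complex_of_real (sfun a m z y \<eta> / \<alpha>)) powr complex_of_real l)
                    (map dx ds @ map dxi es) (x, \<xi>))
                 \<le> max B 0 * (max C0 0 + 1) ^ J * (1 + ?s / \<alpha>) powr l
                     * Lam \<alpha> ?s powr (- real (length ds + length es))
                     * jbr \<xi> powr (- real (length es))
                     * \<bar>Im w\<bar> powr (- real J)"
        unfolding vs_def .
    qed
  qed
qed



end
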